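(* Consider, on the reference element $E=[-1,1]^3$ of a moving curved hexahedral element, the split form ALE discontinuous Galerkin spectral element semi-discretization of the three-dimensional compressible Euler equations described in the context, with time-differentiable nodal values $\mathcal{J}_{ijk}(\tau)$ and $\mathbf{U}_{ijk}(\tau)$. Suppose the volume flux functions $\mathbf{G}^{\#}_\iota$ and the surface flux functions $\mathbf{G}^{*}_\iota$, $\iota=1,2,3$, satisfy Jameson's conditions $$\mathbf{G}^{\upsilon+1,\#}_\iota=\mathbf{G}^{1,\#}_\iota\{\{u_\upsilon\}\}+\{\{p\}\}\,\delta_{\iota\upsilon},\qquad \mathbf{G}^{\upsilon+1,*}_\iota=\mathbf{G}^{1,*}_\iota\{\{u_\upsilon\}\}+\{\{p\}\}^{\star}\,\delta_{\iota\upsilon},\qquad \upsilon=1,2,3,$$ where $\{\{p\}\}^{\star}$ can be any consistent numerical trace approximation of the pressure (in the volume condition the averages are taken of the two nodal states entering $\mathbf{G}^{\#}_\iota$, in the surface condition of the interior and exterior states), and the Cartesian surface mass fluxes $\mathbf{G}^{1,*}_\iota$ are consistent with $\rho(u_\iota-\nu_\iota)$, $\iota=1,2,3$. Then for every element the scheme satisfies $$\frac{\partial}{\partial\tau}\big\langle I^N(\Bbbk),\mathcal{J}\big\rangle_N=-\frac12\sum_{\iota=1}^3\Big\langle \Big(\frac{\partial I^N(p)}{\partial\xi^\iota}\Big)\mathbb{J}\vec a^{\,\iota}+p\Big(\frac{\partial I^N(\mathbb{J}\vec a^{\,\iota})}{\partial\xi^\iota}\Big)+\Big(\frac{\partial I^N(p\,\mathbb{J}\vec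 a^{\,\iota})}{\partial\xi^\iota}\Big),\vec u\Big\rangle_N-\sum_{\iota=1}^3\int_{\partial E,N}\hat s\,n_\iota\Big[\tfrac12\overline{|\vec u|}^{2}\,\mathbf{G}^{1,*}_\iota+\big(\{\{p\}\}^{\star}-p^-\big)u_\iota^-\Big]\,dS,$$ where $\Bbbk=\frac12\rho|\vec u|^2$ is the kinetic energy, $\overline{|\vec u|}^{2}:=\sum_{\iota=1}^3\big(2\{\{u_\iota\}\}^2-\{\{u_\iota^2\}\}\big)$, and $u_\iota^-$, $p^-$ are the interior (own-element) values at the surface nodes.
   Context: Euler setting: state $\mathbf{u}=[\rho,\rho\vec u,\rho e+\tfrac12\rho|\vec u|^2]^T\in\mathbb{R}^5$ with density $\rho$, velocity $\vec u=(u_1,u_2,u_3)$, pressure $p$, $e=p/((\gamma-1)\rho)$, $\gamma>1$. Advective fluxes $\mathbf{f}_\iota$ ($\iota=1,2,3$) have components $\mathbf{f}^1_\iota=\rho u_\iota$, $\mathbf{f}^{\upsilon+1}_\iota=\rho u_\iota u_\upsilon+p\delta_{\iota\upsilon}$ ($\upsilon=1,2,3$), $\mathbf{f}^5_\iota=\rho u_\iota(e+\frac12|\vec u|^2)+pu_\iota$; superscripts $1,\dots,5$ denote components. $\vec\nu=(\nu_1,\nu_2,\nu_3)$ is the prescribed grid velocity. Discretization: $\{\xi_i\}_{i=0}^N$ are the Legendre–Gauss–Lobatto (LGL) nodes on $[-1,1]$ ($\xi_0=-1,\xi_N=1$) with weights $\omega_i$, $\ell_j$ the Lagrange polynomials on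 them, $\mathcal{D}_{ij}=\ell_j'(\xi_i)$; $\omega_{ijk}=\omega_i\omega_j\omega_k$. All quantities are represented by nodal values at the tensor LGL nodes $(\xi_i,\xi_j,\xi_k)$; $I^N(g)=\sum_{ijk}g_{ijk}\ell_i(\xi^1)\ell_j(\xi^2)\ell_k(\xi^3)$ is tensor-product interpolation, and derivatives $\partial/\partial\xi^\iota$ are exact derivatives of interpolants. Discrete inner product: $\langle \mathbf f,\mathbf g\rangle_N=\sum_{i,j,k=0}^N\omega_{ijk}\mathbf f_{ijk}^T\mathbf g_{ijk}$ (also for scalar or 3-vector valued functions). Discrete surface integral: for $h$ defined at surface nodes (possibly depending on the outward reference normal $\hat n=(\hat n^1,\hat n^2,\hat n^3)$ of the face), $\int_{\partial E,N}h\,dS$ is the sum over the six faces of $E$ of the tensor LGL quadrature (weights $\omega$ in the two tangential directions) of $h$ at the face nodes; for fluxes, $\int_{\partial E,N}\boldsymbol\varphi^T\mathbf F_1\hat n^1dS=\sum_{j,k}\omega_j\omega_k(\boldsymbol\varphi_{Njk}^T(\mathbf F_1)_{Njk}-\boldsymbol\varphi_{0jk}^T(\mathbf F_1)_{0jk})$ and analogously in directions 2, 3. $\mathcal{J}_{ijk}(\tau)$ are nodal values of the discrete Jacobian; $\mathbb{J}\vec a^{\,\iota}$ ($\iota=1,2,3$) are discrete volume-weighted contravariant vectors with Cartesian components $\mathbb{J}a^\iota_\beta$; on faces, $\hat s=|\sum_\iota \mathbb{J}\vec a^{\,\iota}\hat n^\iota|$ and $\vec n=\hat s^{-1}\sum_\iota\mathbb{J}\vec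 a^{\,\iota}\hat n^\iota$. The nodal state $\mathbf{U}_{ijk}$ determines nodal $\rho,\vec u,p,e$; $\mathbf{F}_\iota(\mathbf U)$ is $\mathbf f_\iota$ evaluated at nodes and $\mathbf{G}_\iota=\mathbf F_\iota(\mathbf U)-\nu_\iota\mathbf U$. Averages/jumps: for nodal pairs, $\{\{a\}\}_{(i,m)jk}=\frac12(a_{ijk}+a_{mjk})$ (analogously in $j$, $k$); at surface nodes, with "$-$" the own-element value and "$+$" the neighbor's value, $\{\{a\}\}=\frac12(a^++a^-)$, $[\![a]\!]=a^+-a^-$. Volume fluxes $\mathbf{G}^{\#}_\iota(\vec\nu_L,\vec\nu_R,\mathbf U_L,\mathbf U_R)\in\mathbb R^5$ are symmetric in exchanging $(\vec\nu_L,\mathbf U_L)\leftrightarrow(\vec\nu_R,\mathbf U_R)$ and consistent: $\mathbf G^{\#}_\iota(\vec\nu_L,\vec\nu_R,\mathbf U,\mathbf U)=\mathbf F_\iota(\mathbf U)-\{\{\nu_\iota\}\}\mathbf U$. Volume operator at node $ijk$: $\mathbb{D}\cdot\tilde{\mathbf G}^{\#}_{ijk}=\sum_{m=0}^N\sum_{\beta=1}^3\big[2\mathcal D_{im}\mathbf G^{\#}_\beta(\vec\nu_{ijk},\vec\nu_{mjk},\mathbf U_{ijk},\mathbf U_{mjk})\{\{\mathbb Ja^1_\beta\}\}_{(i,m)jk}+2\mathcal D_{jm}\mathbf G^{\#}_\beta(\vec\nu_{ijk},\vec\nu_{imk},\mathbf U_{ijk},\mathbf U_{imk})\{\{\mathbb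 Ja^2_\beta\}\}_{i(j,m)k}+2\mathcal D_{km}\mathbf G^{\#}_\beta(\vec\nu_{ijk},\vec\nu_{ijm},\mathbf U_{ijk},\mathbf U_{ijm})\{\{\mathbb Ja^3_\beta\}\}_{ij(k,m)}\big]$. Surface fluxes $\mathbf G^*_\iota$ are functions of interior/exterior states; $\tilde{\mathbf G}^*_{\hat n}=\hat s\sum_\iota n_\iota\mathbf G^*_\iota$ and $\tilde{\mathbf G}_{\hat n}=\sum_\iota\hat n^\iota\sum_\beta\mathbb Ja^\iota_\beta\mathbf G_\beta$. Scheme (per element): for all $\boldsymbol\varphi$ in the tensor-product polynomials of degree $N$ with values in $\mathbb R^5$, $\big\langle \frac{\partial(\mathcal J\mathbf U)}{\partial\tau},\boldsymbol\varphi\big\rangle_N=-\langle\mathbb D\cdot\tilde{\mathbf G}^{\#},\boldsymbol\varphi\rangle_N-\int_{\partial E,N}\boldsymbol\varphi^T(\tilde{\mathbf G}^*_{\hat n}-\tilde{\mathbf G}_{\hat n})\,dS,$ coupled with an evolution equation for $\mathcal J$ (discrete geometric conservation law) $\langle\partial_\tau\mathcal J,\varphi\rangle_N=\langle\mathbb D\cdot\tilde{\vec\nu}^{\#},\varphi\rangle_N+\int_{\partial E,N}\varphi(\tilde\nu^*_{\hat n}-\tilde\nu_{\hat n})dS$, whose precise form is not used in the claim. Here $\langle I^N(\Bbbk),\mathcal J\rangle_N=\sum_{ijk}\omega_{ijk}\Bbbk_{ijk}\mathcal J_{ijk}$. *)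

theory Defs
  imports "HOL-Analysis.Analysis" "HOL-Computational_Algebra.Polynomial"
begin

text \<open>The (N+1)-point Legendre-Gauss-Lobatto rule on [-1,1]: nodes ordered increasingly,
  containing both endpoints, exact for all polynomials of degree at most 2N-1.
  (These properties determine the LGL nodes and weights uniquely.)\<close>
definition lgl_quadrature :: "nat \<Rightarrow> (nat \<Rightarrow> real) \<Rightarrow> (nat \<Rightarrow> real) \<Rightarrow> bool" where
  "lgl_quadrature N \<xi> \<omega> \<longleftrightarrow>
     1 \<le> N \<and> \<xi> 0 = -1 \<and> \<xi> N = 1 \<and> (\<forall>i<N. \<xi> i < \<xi> (Suc i)) \<and>
     (\<forall>q :: real poly. degree q \<le> 2 * N - 1 \<longrightarrow>
        (\<Sum>i=0..N. \<omega> i * poly q (\<xi> i)) = integral {-1..1} (poly q))"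

definition lagrange_basis :: "nat \<Rightarrow> (nat \<Rightarrow> real) \<Rightarrow> nat \<Rightarrow> real poly" where
  "lagrange_basis N \<xi> j = (\<Prod>m\<in>{0..N} - {j}. smult (1 / (\<xi> j - \<xi> m)) [:- \<xi> m, 1:])"

definition dmat :: "nat \<Rightarrow> (nat \<Rightarrow> real) \<Rightarrow> nat \<Rightarrow> nat \<Rightarrow> real" where
  "dmat N \<xi> i j = poly (pderiv (lagrange_basis N \<xi> j)) (\<xi> i)"

text \<open>Nodal values of the derivative in direction xi^iota of the tensor-product interpolant
  of nodal data g.\<close>
definition dxi :: "nat \<Rightarrow> (nat \<Rightarrow> nat \<Rightarrow> real) \<Rightarrow> nat \<Rightarrow> (nat \<Rightarrow> nat \<Rightarrow> nat \<Rightarrow> real)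
                     \<Rightarrow> nat \<Rightarrow> nat \<Rightarrow> nat \<Rightarrow> real" where
  "dxi N D \<iota> g i j k =
     (if \<iota> = 1 then (\<Sum>m=0..N. D i m * g m j k)
      else if \<iota> = 2 then (\<Sum>m=0..N. D j m * g i m k)
      else (\<Sum>m=0..N. D k m * g i j m))"

text \<open>Weighted nodal sum: sum over i,j,k of omega_i omega_j omega_k h_ijk
  (the discrete inner product is this applied to the pointwise inner product).\<close>
definition wsum :: "nat \<Rightarrow> (nat \<Rightarrow> real) \<Rightarrow> (nat \<Rightarrow> nat \<Rightarrow> nat \<Rightarrow> real) \<Rightarrow> real" where
  "wsum N \<omega> h = (\<Sum>i=0..N. \<Sum>j=0..N. \<Sum>k=0..N. \<omega> i * \<omega> j * \<omega> k * h i j k)"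

definition rho :: "(nat \<Rightarrow> real) \<Rightarrow> real" where
  "rho U = U 1"

definition vel :: "(nat \<Rightarrow> real) \<Rightarrow> nat \<Rightarrow> real" where
  "vel U v = U (Suc v) / U 1"

definition pres :: "real \<Rightarrow> (nat \<Rightarrow> real) \<Rightarrow> real" where
  "pres \<gamma> U = (\<gamma> - 1) * (U 5 - rho U * (\<Sum>v=1..3. vel U v ^ 2) / 2)"

definition eint :: "real \<Rightarrow> (nat \<Rightarrow> real) \<Rightarrow> real" where
  "eint \<gamma> U = pres \<gamma> U / ((\<gamma> - 1) * rho U)"

definition kin :: "(nat \<Rightarrow> real) \<Rightarrow> real" where
  "kin U = rho U * (\<Sum>v=1..3. vel U v ^ 2) / 2"

definition flux :: "real \<Rightarrow> nat \<Rightarrow> (nat \<Rightarrow> real) \<Rightarrow> nat \<Rightarrow> real" where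
  "flux \<gamma> \<iota> U c =
     (if c = 1 then rho U * vel U \<iota>
      else if c \<in> {2, 3, 4} then rho U * vel U \<iota> * vel U (c - 1) + (if \<iota> = c - 1 then pres \<gamma> U else 0)
      else if c = 5 then rho U * vel U \<iota> * (eint \<gamma> U + (\<Sum>v=1..3. vel U v ^ 2) / 2) + pres \<gamma> U * vel U \<iota>
      else 0)"

text \<open>D . G~# at node ijk, component c.  Ja iota beta i j k are the nodal values of
  the contravariant component Ja^iota_beta, nu i j k the nodal grid velocity vector,
  U i j k the nodal state.\<close>
definition vol_op ::
  "nat \<Rightarrow> (nat \<Rightarrow> nat \<Rightarrow> real)
   \<Rightarrow> (nat \<Rightarrow> (nat \<Rightarrow> real) \<Rightarrow> (nat \<Rightarrow> real) \<Rightarrow> (nat \<Rightarrow> real) \<Rightarrow> (nat \<Rightarrow> real) \<Rightarrow> nat \<Rightarrow> real)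
   \<Rightarrow> (nat \<Rightarrow> nat \<Rightarrow> nat \<Rightarrow> nat \<Rightarrow> nat \<Rightarrow> real)
   \<Rightarrow> (nat \<Rightarrow> nat \<Rightarrow> nat \<Rightarrow> nat \<Rightarrow> real)
   \<Rightarrow> (nat \<Rightarrow> nat \<Rightarrow> nat \<Rightarrow> nat \<Rightarrow> real)
   \<Rightarrow> nat \<Rightarrow> nat \<Rightarrow> nat \<Rightarrow> nat \<Rightarrow> real" where
  "vol_op N D Gs Ja nu U i j k c =
     (\<Sum>m=0..N. \<Sum>\<beta>=1..3.
        2 * D i m * Gs \<beta> (nu i j k) (nu m j k) (U i j k) (U m j k) c
          * ((Ja 1 \<beta> i j k + Ja 1 \<beta> m j k) / 2)
      + 2 * D j m * Gs \<beta> (nu i j k) (nu i m k) (U i j k) (U i m k) c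
          * ((Ja 2 \<beta> i j k + Ja 2 \<beta> i m k) / 2)
      + 2 * D k m * Gs \<beta> (nu i j k) (nu i j m) (U i j k) (U i j m) c
          * ((Ja 3 \<beta> i j k + Ja 3 \<beta> i j m) / 2))"

text \<open>Face (kappa, sigma): kappa in {1,2,3} is the reference direction, sigma = True is the
  face xi^kappa = 1, sigma = False the face xi^kappa = -1.  Surface node (a,b) of that face
  (tangential indices in increasing direction order) is the volume node fnode.\<close>
definition fnode :: "nat \<Rightarrow> nat \<Rightarrow> bool \<Rightarrow> nat \<Rightarrow> nat \<Rightarrow> nat \<times> nat \<times> nat" where
  "fnode N \<kappa> \<sigma> a b =
     (let s = (if \<sigma> then N else 0) in
      if \<kappa> = 1 then (s, a, b) else if \<kappa> = 2 then (a, s, b) else (a, b, s))"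

definition nhat :: "nat \<Rightarrow> bool \<Rightarrow> nat \<Rightarrow> real" where
  "nhat \<kappa> \<sigma> \<iota> = (if \<iota> = \<kappa> then (if \<sigma> then 1 else -1) else 0)"

definition surf_int :: "nat \<Rightarrow> (nat \<Rightarrow> real) \<Rightarrow> (nat \<Rightarrow> bool \<Rightarrow> nat \<Rightarrow> nat \<Rightarrow> real) \<Rightarrow> real" where
  "surf_int N \<omega> h = (\<Sum>\<kappa>=1..3. \<Sum>\<sigma>\<in>(UNIV :: bool set). \<Sum>a=0..N. \<Sum>b=0..N. \<omega> a * \<omega> b * h \<kappa> \<sigma> a b)"

definition snvec :: "(nat \<Rightarrow> nat \<Rightarrow> real) \<Rightarrow> nat \<Rightarrow> bool \<Rightarrow> nat \<Rightarrow> real" where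
  "snvec JaN \<kappa> \<sigma> \<beta> = (\<Sum>\<iota>=1..3. JaN \<iota> \<beta> * nhat \<kappa> \<sigma> \<iota>)"

definition shat :: "(nat \<Rightarrow> nat \<Rightarrow> real) \<Rightarrow> nat \<Rightarrow> bool \<Rightarrow> real" where
  "shat JaN \<kappa> \<sigma> = sqrt (\<Sum>\<beta>=1..3. (snvec JaN \<kappa> \<sigma> \<beta>) ^ 2)"

definition nvec :: "(nat \<Rightarrow> nat \<Rightarrow> real) \<Rightarrow> nat \<Rightarrow> bool \<Rightarrow> nat \<Rightarrow> real" where
  "nvec JaN \<kappa> \<sigma> \<beta> = snvec JaN \<kappa> \<sigma> \<beta> / shat JaN \<kappa> \<sigma>"

definition surf_flux_contra ::
  "(nat \<Rightarrow> (nat \<Rightarrow> real) \<Rightarrow> (nat \<Rightarrow> real) \<Rightarrow> (nat \<Rightarrow> real) \<Rightarrow> nat \<Rightarrow> real)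
   \<Rightarrow> (nat \<Rightarrow> nat \<Rightarrow> real) \<Rightarrow> nat \<Rightarrow> bool \<Rightarrow> (nat \<Rightarrow> real) \<Rightarrow> (nat \<Rightarrow> real) \<Rightarrow> (nat \<Rightarrow> real)
   \<Rightarrow> nat \<Rightarrow> real" where
  "surf_flux_contra Gst JaN \<kappa> \<sigma> nu Um Up c =
     (\<Sum>\<iota>=1..3. shat JaN \<kappa> \<sigma> * nvec JaN \<kappa> \<sigma> \<iota> * Gst \<iota> nu Um Up c)"

definition flux_contra ::
  "real \<Rightarrow> (nat \<Rightarrow> nat \<Rightarrow> real) \<Rightarrow> nat \<Rightarrow> bool \<Rightarrow> (nat \<Rightarrow> real) \<Rightarrow> (nat \<Rightarrow> real) \<Rightarrow> nat \<Rightarrow> real" where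
  "flux_contra \<gamma> JaN \<kappa> \<sigma> nu Um c =
     (\<Sum>\<iota>=1..3. nhat \<kappa> \<sigma> \<iota> * (\<Sum>\<beta>=1..3. JaN \<iota> \<beta> * (flux \<gamma> \<beta> Um c - nu \<beta> * Um c)))"

definition ubar2 :: "(nat \<Rightarrow> real) \<Rightarrow> (nat \<Rightarrow> real) \<Rightarrow> real" where
  "ubar2 Um Up = (\<Sum>v=1..3. 2 * ((vel Um v + vel Up v) / 2) ^ 2 - (vel Um v ^ 2 + vel Up v ^ 2) / 2)"

end

theory Submission
  imports Defs
begin

lemma mono_nodes:
  assumes "\<forall>i<N. (\<xi>::nat\<Rightarrow>real) i < \<xi> (Suc i)" "i < j" "j \<le> N"
  shows "\<xi> i < \<xi> j"
  using assms(2,3)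
proof (induction j)
  case 0 then show ?case by simp
next
  case (Suc j)
  have "\<xi> j < \<xi> (Suc j)" using assms(1) Suc.prems by auto
  then show ?case using Suc by (cases "i = j") auto
qed

lemma nodes_inj:
  assumes "\<forall>i<N. (\<xi>::nat\<Rightarrow>real) i < \<xi> (Suc i)" "i \<le> N" "j \<le> N" "i \<noteq> j"
  shows "\<xi> i \<noteq> \<xi> j"
  using mono_nodes[OF assms(1)] assms(2-4)
  by (metis less_irrefl nat_neq_iff)

lemma lagrange_delta:
  assumes "\<forall>i<N. (\<xi>::nat\<Rightarrow>real) i < \<xi> (Suc i)" "i \<le> N" "j \<le> N"
  shows "poly (lagrange_basis N \<xi> j) (\<xi> i) = (if i = j then 1 else 0)"
proof (cases "i = j")
  case True
  have "poly (lagrange_basis N \<xi> j) (\<xi> i) = (\<Prod>m\<in>{0..N} - {j}. 1)"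
    unfolding lagrange_basis_def poly_prod
  proof (rule prod.cong)
    fix x assume "x \<in> {0..N} - {j}"
    then have "\<xi> j - \<xi> x \<noteq> 0" using nodes_inj[OF assms(1), of j x] assms by auto
    then show "poly (smult (1 / (\<xi> j - \<xi> x)) [:- \<xi> x, 1:]) (\<xi> i) = 1" using True by (simp add: diff_divide_distrib[symmetric])
  qed simp
  then show ?thesis using True by simp
next
  case False
  have "i \<in> {0..N} - {j}" using False assms by auto
  then have "poly (lagrange_basis N \<xi> j) (\<xi> i) = 0"
    unfolding lagrange_basis_def poly_prod
    by (intro prod_zero) (auto intro!: bexI[of _ i])
  then show ?thesis using False by simp
qed

lemma degree_lagrange: "degree (lagrange_basis N \<xi> j) \<le> N" if "j \<le> N"
proof -
  have "degree (lagrange_basis N \<xi> j) \<le> (\<Sum>m\<in>{0..N} - {j}. 1)"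
    unfolding lagrange_basis_def
    apply (rule order.trans[OF degree_prod_sum_le], simp)
    apply (rule sum_mono)
    by (simp add: degree_smult_le order.trans[OF degree_smult_le])
  also have "\<dots> \<le> N" using that by auto
  finally show ?thesis .
qed

lemma poly_zero_many_roots:
  fixes p :: "real poly"
  assumes "degree p \<le> N" "\<forall>i<N. \<xi> i < \<xi> (Suc i)" "\<forall>i\<le>N. poly p (\<xi> i) = 0"
  shows "p = 0"
proof (rule ccontr)
  assume "p \<noteq> 0"
  have "\<xi> ` {0..N} \<subseteq> {x. poly p x = 0}" using assms(3) by auto
  then have "card (\<xi> ` {0..N}) \<le> card {x. poly p x = 0}"
    using poly_roots_finite[OF \<open>p \<noteq> 0\<close>] by (intro card_mono) auto
  also have "\<dots> \<le> N" using card_poly_roots_bound[OF \<open>p \<noteq> 0\<close>] assms(1) by simp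
  also have "card (\<xi> ` {0..N}) = Suc N"
    by (subst card_image) (auto intro!: inj_onI dest: nodes_inj[OF assms(2)])
  finally show False by simp
qed

lemma sum_lagrange:
  assumes "\<forall>i<N. (\<xi>::nat\<Rightarrow>real) i < \<xi> (Suc i)"
  shows "(\<Sum>j=0..N. lagrange_basis N \<xi> j) = 1"
proof -
  have "(\<Sum>j=0..N. lagrange_basis N \<xi> j) - 1 = 0"
  proof (rule poly_zero_many_roots[OF _ assms])
    show "degree ((\<Sum>j=0..N. lagrange_basis N \<xi> j) - 1) \<le> N"
      by (intro degree_diff_le degree_sum_le) (auto simp: degree_lagrange)
    show "\<forall>i\<le>N. poly ((\<Sum>j = 0..N. lagrange_basis N \<xi> j) - 1) (\<xi> i) = 0"
    proof (intro allI impI)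
      fix i assume "i \<le> N"
      then have "(\<Sum>j=0..N. poly (lagrange_basis N \<xi> j) (\<xi> i)) = (\<Sum>j=0..N. if i = j then 1 else 0)"
        by (intro sum.cong) (auto simp: lagrange_delta[OF assms])
      also have "\<dots> = 1" using \<open>i \<le> N\<close> by simp
      finally show "poly ((\<Sum>j = 0..N. lagrange_basis N \<xi> j) - 1) (\<xi> i) = 0" by (simp add: poly_sum)
    qed
  qed
  then show ?thesis by simp
qed

lemma dmat_rowsum:
  assumes "\<forall>i<N. (\<xi>::nat\<Rightarrow>real) i < \<xi> (Suc i)"
  shows "(\<Sum>m=0..N. dmat N \<xi> i m) = 0"
proof -
  have "(\<Sum>m=0..N. dmat N \<xi> i m) = poly (pderiv (\<Sum>j=0..N. lagrange_basis N \<xi> j)) (\<xi> i)"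
    unfolding dmat_def by (simp add: higher_pderiv_sum[of 1, simplified] poly_sum)
  then show ?thesis using sum_lagrange[OF assms] by simp
qed

lemma integral_pderiv:
  "integral {-1..1} (poly (pderiv p)) = poly p 1 - poly (p::real poly) (-1)"
proof -
  have "(poly (pderiv p) has_integral (poly p 1 - poly p (-1))) {-1..1}"
    by (rule fundamental_theorem_of_calculus)
       (auto simp: has_real_derivative_iff_has_vector_derivative[symmetric]
             intro: DERIV_subset[OF poly_DERIV])
  then show ?thesis by (rule integral_unique)
qed

lemma sbp:
  assumes quad: "lgl_quadrature N \<xi> \<omega>" and "i \<le> N" "m \<le> N"
  shows "\<omega> i * dmat N \<xi> i m + \<omega> m * dmat N \<xi> m i
     = (if i = N \<and> m = N then 1 else 0) - (if i = 0 \<and> m = 0 then 1 else 0)"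
proof -
  note q = quad[unfolded lgl_quadrature_def]
  have mono: "\<forall>i<N. \<xi> i < \<xi> (Suc i)" using q by blast
  define P where "P = lagrange_basis N \<xi> i * lagrange_basis N \<xi> m"
  have dP: "degree P \<le> 2 * N" unfolding P_def
    using degree_mult_le[of "lagrange_basis N \<xi> i" "lagrange_basis N \<xi> m"]
      degree_lagrange[of i N \<xi>] degree_lagrange[of m N \<xi>] assms by linarith
  have "degree (pderiv P) \<le> 2 * N - 1" using dP by (simp add: degree_pderiv)
  then have ex: "(\<Sum>n=0..N. \<omega> n * poly (pderiv P) (\<xi> n)) = integral {-1..1} (poly (pderiv P))"
    using q by blast
  have "(\<Sum>n=0..N. \<omega> n * poly (pderiv P) (\<xi> n))
      = (\<Sum>n=0..N. (if n = i then \<omega> n * dmat N \<xi> n m else 0) + (if n = m then \<omega> n * dmat N \<xi> n i else 0))"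
    unfolding P_def pderiv_mult dmat_def
    by (rule sum.cong) (auto simp: lagrange_delta[OF mono] assms algebra_simps)
  also have "\<dots> = \<omega> i * dmat N \<xi> i m + \<omega> m * dmat N \<xi> m i"
    using assms by (simp add: sum.distrib)
  finally have l: "\<omega> i * dmat N \<xi> i m + \<omega> m * dmat N \<xi> m i = poly P 1 - poly P (-1)"
    using ex integral_pderiv by simp
  have "poly P 1 = (if i = N \<and> m = N then 1 else 0)"
    unfolding P_def using q lagrange_delta[OF mono, of N i] lagrange_delta[OF mono, of N m] assms
    by (auto simp: poly_mult)
  moreover have "poly P (-1) = (if i = 0 \<and> m = 0 then 1 else 0)"
    unfolding P_def using q lagrange_delta[OF mono, of 0 i] lagrange_delta[OF mono, of 0 m] assms
    by (auto simp: poly_mult)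
  ultimately show ?thesis using l by simp
qed


lemma swap3:
  "(\<Sum>i\<in>A. \<Sum>j\<in>B. \<Sum>k\<in>C. f i j k) = (\<Sum>j\<in>B. \<Sum>k\<in>C. \<Sum>i\<in>A. (f i j k :: 'a::comm_monoid_add))"
proof -
  have "(\<Sum>i\<in>A. \<Sum>j\<in>B. \<Sum>k\<in>C. f i j k) = (\<Sum>j\<in>B. \<Sum>i\<in>A. \<Sum>k\<in>C. f i j k)" by (rule sum.swap)
  also have "\<dots> = (\<Sum>j\<in>B. \<Sum>k\<in>C. \<Sum>i\<in>A. f i j k)" by (rule sum.cong[OF refl], rule sum.swap)
  finally show ?thesis .
qed

lemma if_1_0_mult: "(if c then 1 else 0) * (x::real) = (if c then x else 0)" by simp

lemma if_conj_0: "(if P \<and> Q then x else (0::real)) = (if P then if Q then x else 0 else 0)" by simp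

lemma sbp_core:
  fixes w :: "nat \<Rightarrow> real" and D S :: "nat \<Rightarrow> nat \<Rightarrow> real"
  assumes SBP: "\<And>i m. i\<le>N \<Longrightarrow> m\<le>N \<Longrightarrow> w i * D i m + w m * D m i
        = (if i=N \<and> m=N then 1 else 0) - (if i=0 \<and> m=0 then 1 else 0)"
    and sym: "\<And>i m. i\<le>N \<Longrightarrow> m\<le>N \<Longrightarrow> S i m = S m i"
  shows "(\<Sum>i=0..N. \<Sum>m=0..N. w i * D i m * S i m) = (S N N - S 0 0) / 2"
proof -
  let ?X = "\<Sum>i=0..N. \<Sum>m=0..N. w i * D i m * S i m"
  have "?X = (\<Sum>m=0..N. \<Sum>i=0..N. w i * D i m * S i m)" by (rule sum.swap)
  also have "\<dots> = (\<Sum>i=0..N. \<Sum>m=0..N. w m * D m i * S i m)"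
    by (intro sum.cong refl) (simp add: sym)
  finally have X2: "?X = (\<Sum>i=0..N. \<Sum>m=0..N. w m * D m i * S i m)" .
  have "2 * ?X = (\<Sum>i=0..N. \<Sum>m=0..N. (w i * D i m + w m * D m i) * S i m)"
    by (subst mult_2, subst (2) X2) (simp add: sum.distrib[symmetric] algebra_simps)
  also have "\<dots> = (\<Sum>i=0..N. \<Sum>m=0..N. ((if i=N \<and> m=N then 1 else 0) - (if i=0 \<and> m=0 then 1 else 0)) * S i m)"
    by (intro sum.cong refl) (simp add: SBP)
  also have "\<dots> = (\<Sum>i=0..N. \<Sum>m=0..N. (if i=N \<and> m=N then S i m else 0) - (if i=0 \<and> m=0 then S i m else 0))"
    by (intro sum.cong refl) (simp only: left_diff_distrib if_1_0_mult)
  also have "\<dots> = (\<Sum>i=0..N. \<Sum>m=0..N. (if i=N then (if m=N then S i m else 0) else 0))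
       - (\<Sum>i=0..N. \<Sum>m=0..N. (if i=0 then (if m=0 then S i m else 0) else 0))"
    by (simp only: sum_subtractf[symmetric] if_conj_0)
  also have "\<dots> = S N N - S 0 0"
  proof -
    have a: "(\<Sum>i=0..N. \<Sum>m=0..N. (if i=N then (if m=N then S i m else 0) else 0)) = (\<Sum>i=0..N. if i=N then S i N else 0)"
      by (intro sum.cong refl) simp
    have b: "(\<Sum>i=0..N. \<Sum>m=0..N. (if i=0 then (if m=0 then S i m else 0) else 0)) = (\<Sum>i=0..N. if i=0 then S i 0 else 0)"
      by (intro sum.cong refl) simp
    show ?thesis unfolding a b by simp
  qed
  finally show ?thesis by simp
qed

lemma dir1:
  fixes w :: "nat \<Rightarrow> real" and D :: "nat \<Rightarrow> nat \<Rightarrow> real" and F :: "nat \<Rightarrow> nat \<Rightarrow> nat \<Rightarrow> nat \<Rightarrow> real"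
  assumes SBP: "\<And>i m. i\<le>N \<Longrightarrow> m\<le>N \<Longrightarrow> w i * D i m + w m * D m i
        = (if i=N \<and> m=N then 1 else 0) - (if i=0 \<and> m=0 then 1 else 0)"
    and sym: "\<And>i m j k. i\<le>N \<Longrightarrow> m\<le>N \<Longrightarrow> j\<le>N \<Longrightarrow> k\<le>N \<Longrightarrow> F i m j k = F m i j k"
  shows "(\<Sum>i=0..N. \<Sum>j=0..N. \<Sum>k=0..N. w i * w j * w k * (\<Sum>m=0..N. 2 * D i m * F i m j k))
       = (\<Sum>j=0..N. \<Sum>k=0..N. w j * w k * (F N N j k - F 0 0 j k))"
proof -
  have "(\<Sum>i=0..N. \<Sum>j=0..N. \<Sum>k=0..N. w i * w j * w k * (\<Sum>m=0..N. 2 * D i m * F i m j k))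
     = (\<Sum>j=0..N. \<Sum>k=0..N. \<Sum>i=0..N. w i * w j * w k * (\<Sum>m=0..N. 2 * D i m * F i m j k))"
    by (rule swap3)
  also have "\<dots> = (\<Sum>j=0..N. \<Sum>k=0..N. w j * w k * 2 * (\<Sum>i=0..N. \<Sum>m=0..N. w i * D i m * F i m j k))"
    by (intro sum.cong refl) (simp add: sum_distrib_left mult_ac)
  also have "\<dots> = (\<Sum>j=0..N. \<Sum>k=0..N. w j * w k * (F N N j k - F 0 0 j k))"
  proof (intro sum.cong refl)
    fix j k assume "j \<in> {0..N}" "k \<in> {0..N}"
    then show "w j * w k * 2 * (\<Sum>i=0..N. \<Sum>m=0..N. w i * D i m * F i m j k) = w j * w k * (F N N j k - F 0 0 j k)"
      by (subst sbp_core[OF SBP, of "\<lambda>i m. F i m j k"]) (auto intro: sym)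
  qed
  finally show ?thesis .
qed

lemma dir2:
  fixes w :: "nat \<Rightarrow> real" and D :: "nat \<Rightarrow> nat \<Rightarrow> real" and F :: "nat \<Rightarrow> nat \<Rightarrow> nat \<Rightarrow> nat \<Rightarrow> real"
  assumes SBP: "\<And>i m. i\<le>N \<Longrightarrow> m\<le>N \<Longrightarrow> w i * D i m + w m * D m i
        = (if i=N \<and> m=N then 1 else 0) - (if i=0 \<and> m=0 then 1 else 0)"
    and sym: "\<And>i m j k. i\<le>N \<Longrightarrow> m\<le>N \<Longrightarrow> j\<le>N \<Longrightarrow> k\<le>N \<Longrightarrow> F i m j k = F m i j k"
  shows "(\<Sum>i=0..N. \<Sum>j=0..N. \<Sum>k=0..N. w i * w j * w k * (\<Sum>m=0..N. 2 * D j m * F j m i k))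
       = (\<Sum>i=0..N. \<Sum>k=0..N. w i * w k * (F N N i k - F 0 0 i k))"
proof -
  have "(\<Sum>i=0..N. \<Sum>j=0..N. \<Sum>k=0..N. w i * w j * w k * (\<Sum>m=0..N. 2 * D j m * F j m i k))
     = (\<Sum>j=0..N. \<Sum>i=0..N. \<Sum>k=0..N. w j * w i * w k * (\<Sum>m=0..N. 2 * D j m * F j m i k))"
    by (subst sum.swap) (simp add: mult_ac)
  also have "\<dots> = (\<Sum>i=0..N. \<Sum>k=0..N. w i * w k * (F N N i k - F 0 0 i k))"
    by (rule dir1[OF SBP sym])
  finally show ?thesis .
qed

lemma dir3:
  fixes w :: "nat \<Rightarrow> real" and D :: "nat \<Rightarrow> nat \<Rightarrow> real" and F :: "nat \<Rightarrow> nat \<Rightarrow> nat \<Rightarrow> nat \<Rightarrow> real"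
  assumes SBP: "\<And>i m. i\<le>N \<Longrightarrow> m\<le>N \<Longrightarrow> w i * D i m + w m * D m i
        = (if i=N \<and> m=N then 1 else 0) - (if i=0 \<and> m=0 then 1 else 0)"
    and sym: "\<And>i m j k. i\<le>N \<Longrightarrow> m\<le>N \<Longrightarrow> j\<le>N \<Longrightarrow> k\<le>N \<Longrightarrow> F i m j k = F m i j k"
  shows "(\<Sum>i=0..N. \<Sum>j=0..N. \<Sum>k=0..N. w i * w j * w k * (\<Sum>m=0..N. 2 * D k m * F k m i j))
       = (\<Sum>i=0..N. \<Sum>j=0..N. w i * w j * (F N N i j - F 0 0 i j))"
proof -
  have "(\<Sum>i=0..N. \<Sum>j=0..N. \<Sum>k=0..N. w i * w j * w k * (\<Sum>m=0..N. 2 * D k m * F k m i j))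
     = (\<Sum>k=0..N. \<Sum>i=0..N. \<Sum>j=0..N. w k * w i * w j * (\<Sum>m=0..N. 2 * D k m * F k m i j))"
    by (rule HOL.sym, subst swap3) (simp add: mult_ac)
  also have "\<dots> = (\<Sum>i=0..N. \<Sum>j=0..N. w i * w j * (F N N i j - F 0 0 i j))"
    by (rule dir1[OF SBP sym])
  finally show ?thesis .
qed


definition phiv :: "(nat \<Rightarrow> real) \<Rightarrow> nat \<Rightarrow> real" where
  "phiv V c = (if c = 1 then - (\<Sum>v=1..3. vel V v ^ 2) / 2 else if c \<in> {2,3,4} then vel V (c - 1) else 0)"

lemma sum3: "(\<Sum>v=(1::nat)..3. f v) = f 1 + f 2 + (f 3 :: real)"
  by (simp add: numeral_eq_Suc sum.atLeast_Suc_atMost)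

lemma sum5: "(\<Sum>v=(1::nat)..5. f v) = f 1 + f 2 + f 3 + f 4 + (f 5 :: real)"
  by (simp add: numeral_eq_Suc sum.atLeast_Suc_atMost)

lemma phi_sum: "(\<Sum>c=1..5. phiv V c * g c)
   = - (\<Sum>v=1..3. vel V v ^ 2) / 2 * g 1 + vel V 1 * g 2 + vel V 2 * g 3 + vel V 3 * g 4"
  unfolding sum5 by (simp add: phiv_def)

lemma jam_pt:
  assumes jam: "\<forall>v\<in>{1..3}. G (v+1) = G 1 * ((vel UL v + vel UR v)/2) + (if \<iota> = v then P else 0)"
    and io: "\<iota> \<in> {1..3}"
  shows "(\<Sum>c=1..5. phiv UL c * G c) = G 1 * (\<Sum>v=1..3. vel UL v * vel UR v) / 2 + vel UL \<iota> * P"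
proof -
  have g2: "G 2 = G 1 * ((vel UL 1 + vel UR 1)/2) + (if \<iota> = 1 then P else 0)" using bspec[OF jam, of 1] by (simp add: numeral_eq_Suc)
  have g3: "G 3 = G 1 * ((vel UL 2 + vel UR 2)/2) + (if \<iota> = 2 then P else 0)" using bspec[OF jam, of 2] by (simp add: numeral_eq_Suc)
  have g4: "G 4 = G 1 * ((vel UL 3 + vel UR 3)/2) + (if \<iota> = 3 then P else 0)" using bspec[OF jam, of 3] by (simp add: numeral_eq_Suc)
  have "\<iota> = 1 \<or> \<iota> = 2 \<or> \<iota> = 3" using io by auto
  then show ?thesis unfolding phi_sum g2 g3 g4 sum3
    by (elim disjE) (simp_all add: field_simps power2_eq_square)
qed

lemma vel1: "vel V (Suc 0) = vel V 1" by (simp add: numeral_eq_Suc)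

lemma flux_pt:
  assumes "rho V > 0" "\<beta> \<in> {1..3}"
  shows "(\<Sum>c=1..5. phiv V c * (flux \<gamma> \<beta> V c - n \<beta> * V c))
     = (rho V * vel V \<beta> - n \<beta> * rho V) * (\<Sum>v=1..3. vel V v ^ 2) / 2 + pres \<gamma> V * vel V \<beta>"
proof -
  have V1: "V 1 = rho V" by (simp add: rho_def)
  have V2: "V 2 = rho V * vel V 1" "V 3 = rho V * vel V 2" "V 4 = rho V * vel V 3"
    using assms(1) by (auto simp: rho_def vel_def numeral_eq_Suc)
  have "\<beta> = 1 \<or> \<beta> = 2 \<or> \<beta> = 3" using assms(2) by auto
  have f1: "flux \<gamma> \<beta> V 1 = rho V * vel V \<beta>" by (simp add: flux_def)
  have f2: "flux \<gamma> \<beta> V 2 = rho V * vel V \<beta> * vel V 1 + (if \<beta> = 1 then pres \<gamma> V else 0)" by (simp add: flux_def)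
  have f3: "flux \<gamma> \<beta> V 3 = rho V * vel V \<beta> * vel V 2 + (if \<beta> = 2 then pres \<gamma> V else 0)" by (simp add: flux_def)
  have f4: "flux \<gamma> \<beta> V 4 = rho V * vel V \<beta> * vel V 3 + (if \<beta> = 3 then pres \<gamma> V else 0)" by (simp add: flux_def)
  show ?thesis using \<open>\<beta> = 1 \<or> \<beta> = 2 \<or> \<beta> = 3\<close> unfolding phi_sum V1 V2 sum3 f1 f2 f3 f4
    by (elim disjE) (simp_all add: field_simps power2_eq_square)
qed

lemma ubar2_eq: "ubar2 Um Up = (\<Sum>v=1..3. vel Um v * vel Up v)"
  unfolding ubar2_def by (intro sum.cong refl) (simp add: power2_eq_square field_simps)

lemma shat_nvec:
  assumes "\<beta> \<in> {1..3}"
  shows "shat JaN \<kappa> \<sigma> * nvec JaN \<kappa> \<sigma> \<beta> = snvec JaN \<kappa> \<sigma> \<beta>"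
proof (cases "shat JaN \<kappa> \<sigma> = 0")
  case True
  have "(\<Sum>\<beta>=1..3. (snvec JaN \<kappa> \<sigma> \<beta>) ^ 2) = 0" using True unfolding shat_def by simp
  then have "\<forall>\<beta>\<in>{1..3}. (snvec JaN \<kappa> \<sigma> \<beta>) ^ 2 = 0"
    by (subst (asm) sum_nonneg_eq_0_iff) auto
  then have "snvec JaN \<kappa> \<sigma> \<beta> = 0" using assms by auto
  then show ?thesis using True by simp
next
  case False
  then show ?thesis unfolding nvec_def by simp
qed


lemma kinJ_deriv:
  fixes f :: "nat \<Rightarrow> real \<Rightarrow> real" and g :: "real \<Rightarrow> real"
  assumes fd: "\<And>c. f c differentiable (at \<tau>)" and gd: "g differentiable (at \<tau>)" and pos: "f 1 \<tau> > 0"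
  shows "((\<lambda>s. kin (\<lambda>c. f c s) * g s) has_real_derivative
           (\<Sum>c=1..5. phiv (\<lambda>c. f c \<tau>) c * deriv (\<lambda>s. g s * f c s) \<tau>)) (at \<tau>)"
proof -
  have df: "\<And>c. (f c has_real_derivative deriv (f c) \<tau>) (at \<tau>)"
    using fd DERIV_deriv_iff_real_differentiable by blast
  have dg: "(g has_real_derivative deriv g \<tau>) (at \<tau>)"
    using gd DERIV_deriv_iff_real_differentiable by blast
  have dprod: "deriv (\<lambda>s. g s * f c s) \<tau> = deriv g \<tau> * f c \<tau> + g \<tau> * deriv (f c) \<tau>" for c
    using DERIV_imp_deriv[OF DERIV_mult[OF dg df[of c]]] by (simp add: algebra_simps)
  have ne: "f 1 \<tau> \<noteq> 0" "f (Suc 0) \<tau> \<noteq> 0" using pos by simp_all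
  have k: "\<And>s. kin (\<lambda>c. f c s) = (f 2 s ^ 2 + f 3 s ^ 2 + f 4 s ^ 2) / (2 * f 1 s)"
  proof -
    fix s show "kin (\<lambda>c. f c s) = (f 2 s ^ 2 + f 3 s ^ 2 + f 4 s ^ 2) / (2 * f 1 s)"
      by (cases "f 1 s = 0") (simp_all add: kin_def rho_def vel_def sum3 field_simps power2_eq_square numeral_eq_Suc)
  qed
  show ?thesis
    unfolding k
    apply (rule DERIV_cong)
     apply (rule derivative_eq_intros df dg refl | simp add: ne)+
    unfolding phi_sum dprod
    apply (simp add: phiv_def vel_def sum3 field_simps power2_eq_square numeral_eq_Suc)
    done
qed


definition dotv :: "(nat \<Rightarrow> real) \<Rightarrow> (nat \<Rightarrow> real) \<Rightarrow> real" where
  "dotv V W = (\<Sum>v=1..3. vel V v * vel W v)"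

lemma dotv_sym: "dotv V W = dotv W V" unfolding dotv_def by (simp add: mult.commute)

lemma wsum_add: "wsum N \<omega> (\<lambda>i j k. f i j k + g i j k) = wsum N \<omega> f + wsum N \<omega> g"
  by (simp add: wsum_def sum.distrib algebra_simps)

lemma wsum_cong: "(\<And>i j k. i\<le>N \<Longrightarrow> j\<le>N \<Longrightarrow> k\<le>N \<Longrightarrow> f i j k = g i j k) \<Longrightarrow> wsum N \<omega> f = wsum N \<omega> g"
  unfolding wsum_def by (intro sum.cong refl) auto

lemma wsum_sum: "wsum N \<omega> (\<lambda>i j k. \<Sum>\<iota>\<in>S. f \<iota> i j k) = (\<Sum>\<iota>\<in>S. wsum N \<omega> (f \<iota>))"
proof -
  have "wsum N \<omega> (\<lambda>i j k. \<Sum>\<iota>\<in>S. f \<iota> i j k) = (\<Sum>i=0..N. \<Sum>j=0..N. \<Sum>k=0..N. \<Sum>\<iota>\<in>S. \<omega> i * \<omega> j * \<omega> k * f \<iota> i j k)"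
    unfolding wsum_def by (simp add: sum_distrib_left)
  also have "\<dots> = (\<Sum>\<iota>\<in>S. \<Sum>i=0..N. \<Sum>j=0..N. \<Sum>k=0..N. \<omega> i * \<omega> j * \<omega> k * f \<iota> i j k)"
    by (simp only: sum.swap[of _ S])
  finally show ?thesis unfolding wsum_def .
qed

lemma wsum_cmult: "wsum N \<omega> (\<lambda>i j k. c * f i j k) = c * wsum N \<omega> f"
  by (simp add: wsum_def sum_distrib_left mult_ac)

lemma surf_int_diff: "surf_int N \<omega> (\<lambda>\<kappa> \<sigma> a b. f \<kappa> \<sigma> a b - g \<kappa> \<sigma> a b) = surf_int N \<omega> f - surf_int N \<omega> g"
  by (simp add: surf_int_def sum_subtractf algebra_simps)

lemma surf_int_cong: "(\<And>\<kappa> \<sigma> a b. \<kappa>\<in>{1..3} \<Longrightarrow> a\<le>N \<Longrightarrow> b\<le>N \<Longrightarrow> f \<kappa> \<sigma> a b = g \<kappa> \<sigma> a b) \<Longrightarrow> surf_int N \<omega> f = surf_int N \<omega> g"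
  unfolding surf_int_def by (intro sum.cong refl) auto

lemma surf_int_sum: "surf_int N \<omega> (\<lambda>\<kappa> \<sigma> a b. \<Sum>\<iota>\<in>S. f \<iota> \<kappa> \<sigma> a b) = (\<Sum>\<iota>\<in>S. surf_int N \<omega> (f \<iota>))"
proof -
  have "surf_int N \<omega> (\<lambda>\<kappa> \<sigma> a b. \<Sum>\<iota>\<in>S. f \<iota> \<kappa> \<sigma> a b) = (\<Sum>\<kappa>=1..3. \<Sum>\<sigma>\<in>UNIV. \<Sum>a=0..N. \<Sum>b=0..N. \<Sum>\<iota>\<in>S. \<omega> a * \<omega> b * f \<iota> \<kappa> \<sigma> a b)"
    unfolding surf_int_def by (simp add: sum_distrib_left)
  also have "\<dots> = (\<Sum>\<iota>\<in>S. \<Sum>\<kappa>=1..3. \<Sum>\<sigma>\<in>UNIV. \<Sum>a=0..N. \<Sum>b=0..N. \<omega> a * \<omega> b * f \<iota> \<kappa> \<sigma> a b)"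
    by (simp only: sum.swap[of _ S])
  finally show ?thesis unfolding surf_int_def .
qed

lemma pr1:
  fixes D :: "nat \<Rightarrow> nat \<Rightarrow> real"
  assumes "(\<Sum>m=0..N. D i m) = 0"
  shows "(\<Sum>m=0..N. 2 * D i m * ((P i + P m)/2) * ((J i + J m)/2))
     = (1/2) * ((\<Sum>m=0..N. D i m * P m) * J i + P i * (\<Sum>m=0..N. D i m * J m) + (\<Sum>m=0..N. D i m * (P m * J m)))"
proof -
  have "(\<Sum>m=0..N. 2 * D i m * ((P i + P m)/2) * ((J i + J m)/2))
     = (1/2) * (P i * J i * (\<Sum>m=0..N. D i m) + (\<Sum>m=0..N. D i m * P m) * J i + P i * (\<Sum>m=0..N. D i m * J m) + (\<Sum>m=0..N. D i m * (P m * J m)))"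
  proof -
    have "(\<Sum>m=0..N. 2 * D i m * ((P i + P m)/2) * ((J i + J m)/2))
       = (\<Sum>m=0..N. (1/2) * (P i * J i * D i m) + (1/2) * (D i m * P m * J i) + (1/2) * (P i * (D i m * J m)) + (1/2) * (D i m * (P m * J m)))"
      by (intro sum.cong refl) (simp add: field_simps)
    also have "\<dots> = (1/2) * (P i * J i * (\<Sum>m=0..N. D i m)) + (1/2) * ((\<Sum>m=0..N. D i m * P m) * J i) + (1/2) * (P i * (\<Sum>m=0..N. D i m * J m)) + (1/2) * (\<Sum>m=0..N. D i m * (P m * J m))"
      by (simp only: sum.distrib sum_distrib_left sum_distrib_right)
    finally show ?thesis by (simp add: algebra_simps)
  qed
  then show ?thesis using assms by simp
qed

lemma lin3: "(\<Sum>c\<in>A. (\<phi> c::real) * (x * G1 c * y + x' * G2 c * y' + x'' * G3 c * y''))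
   = x * y * (\<Sum>c\<in>A. \<phi> c * G1 c) + x' * y' * (\<Sum>c\<in>A. \<phi> c * G2 c) + x'' * y'' * (\<Sum>c\<in>A. \<phi> c * G3 c)"
  by (simp add: sum.distrib sum_distrib_left mult_ac distrib_left)

lemma rearr:
  fixes d1 d2 d3 p1 p2 p3 :: "nat \<Rightarrow> real" and a1 a2 a3 g1 g2 g3 :: "nat \<Rightarrow> nat \<Rightarrow> real"
  shows "(\<Sum>m\<in>M. \<Sum>\<beta>\<in>B. d1 m * a1 m \<beta> * (g1 m \<beta> + u \<beta> * p1 m) + d2 m * a2 m \<beta> * (g2 m \<beta> + u \<beta> * p2 m) + d3 m * a3 m \<beta> * (g3 m \<beta> + u \<beta> * p3 m))
 = (\<Sum>m\<in>M. d1 m * (\<Sum>\<beta>\<in>B. g1 m \<beta> * a1 m \<beta>)) + (\<Sum>m\<in>M. d2 m * (\<Sum>\<beta>\<in>B. g2 m \<beta> * a2 m \<beta>)) + (\<Sum>m\<in>M. d3 m * (\<Sum>\<beta>\<in>B. g3 m \<beta> * a3 m \<beta>))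
   + (\<Sum>\<beta>\<in>B. u \<beta> * ((\<Sum>m\<in>M. d1 m * p1 m * a1 m \<beta>) + (\<Sum>m\<in>M. d2 m * p2 m * a2 m \<beta>) + (\<Sum>m\<in>M. d3 m * p3 m * a3 m \<beta>)))"
proof -
  have "(\<Sum>m\<in>M. \<Sum>\<beta>\<in>B. d1 m * a1 m \<beta> * (g1 m \<beta> + u \<beta> * p1 m) + d2 m * a2 m \<beta> * (g2 m \<beta> + u \<beta> * p2 m) + d3 m * a3 m \<beta> * (g3 m \<beta> + u \<beta> * p3 m))
    = (\<Sum>m\<in>M. \<Sum>\<beta>\<in>B. d1 m * (g1 m \<beta> * a1 m \<beta>) + d2 m * (g2 m \<beta> * a2 m \<beta>) + d3 m * (g3 m \<beta> * a3 m \<beta>))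
     + (\<Sum>m\<in>M. \<Sum>\<beta>\<in>B. u \<beta> * (d1 m * p1 m * a1 m \<beta>) + u \<beta> * (d2 m * p2 m * a2 m \<beta>) + u \<beta> * (d3 m * p3 m * a3 m \<beta>))"
    by (simp only: sum.distrib[symmetric]) (intro sum.cong refl, simp add: algebra_simps)
  also have "(\<Sum>m\<in>M. \<Sum>\<beta>\<in>B. u \<beta> * (d1 m * p1 m * a1 m \<beta>) + u \<beta> * (d2 m * p2 m * a2 m \<beta>) + u \<beta> * (d3 m * p3 m * a3 m \<beta>))
     = (\<Sum>\<beta>\<in>B. \<Sum>m\<in>M. u \<beta> * (d1 m * p1 m * a1 m \<beta>) + u \<beta> * (d2 m * p2 m * a2 m \<beta>) + u \<beta> * (d3 m * p3 m * a3 m \<beta>))"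
    by (rule sum.swap)
  finally show ?thesis by (simp add: sum.distrib sum_distrib_left distrib_left)
qed

lemma vol_pt:
  fixes D :: "nat \<Rightarrow> nat \<Rightarrow> real"
  assumes HG: "\<And>\<beta> nL nR UL UR. \<beta>\<in>{1..3} \<Longrightarrow> rho UL > 0 \<Longrightarrow> rho UR > 0 \<Longrightarrow>
      (\<Sum>c=1..5. phiv UL c * Gs \<beta> nL nR UL UR c) = Gs \<beta> nL nR UL UR 1 * dotv UL UR / 2 + vel UL \<beta> * ((pres \<gamma> UL + pres \<gamma> UR)/2)"
    and pos: "\<And>i j k. i\<le>N \<Longrightarrow> j\<le>N \<Longrightarrow> k\<le>N \<Longrightarrow> rho (U i j k) > 0"
    and ijk: "i\<le>N" "j\<le>N" "k\<le>N"
  shows "(\<Sum>c=1..5. phiv (U i j k) c * vol_op N D Gs Ja nu U i j k c)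
   = (\<Sum>m=0..N. 2 * D i m * (\<Sum>\<beta>=1..3. Gs \<beta> (nu i j k) (nu m j k) (U i j k) (U m j k) 1 * dotv (U i j k) (U m j k) / 2 * ((Ja 1 \<beta> i j k + Ja 1 \<beta> m j k)/2)))
   + (\<Sum>m=0..N. 2 * D j m * (\<Sum>\<beta>=1..3. Gs \<beta> (nu i j k) (nu i m k) (U i j k) (U i m k) 1 * dotv (U i j k) (U i m k) / 2 * ((Ja 2 \<beta> i j k + Ja 2 \<beta> i m k)/2)))
   + (\<Sum>m=0..N. 2 * D k m * (\<Sum>\<beta>=1..3. Gs \<beta> (nu i j k) (nu i j m) (U i j k) (U i j m) 1 * dotv (U i j k) (U i j m) / 2 * ((Ja 3 \<beta> i j k + Ja 3 \<beta> i j m)/2)))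
   + (\<Sum>\<beta>=1..3. vel (U i j k) \<beta> *
        ((\<Sum>m=0..N. 2 * D i m * ((pres \<gamma> (U i j k) + pres \<gamma> (U m j k))/2) * ((Ja 1 \<beta> i j k + Ja 1 \<beta> m j k)/2))
       + (\<Sum>m=0..N. 2 * D j m * ((pres \<gamma> (U i j k) + pres \<gamma> (U i m k))/2) * ((Ja 2 \<beta> i j k + Ja 2 \<beta> i m k)/2))
       + (\<Sum>m=0..N. 2 * D k m * ((pres \<gamma> (U i j k) + pres \<gamma> (U i j m))/2) * ((Ja 3 \<beta> i j k + Ja 3 \<beta> i j m)/2))))"
(is "_ = ?R")
proof -
  let ?V = "U i j k"
  have "(\<Sum>c=1..5. phiv ?V c * vol_op N D Gs Ja nu U i j k c)
     = (\<Sum>c=1..5. \<Sum>m=0..N. \<Sum>\<beta>=1..3. phiv ?V c * (2 * D i m * Gs \<beta> (nu i j k) (nu m j k) (U i j k) (U m j k) c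
          * ((Ja 1 \<beta> i j k + Ja 1 \<beta> m j k) / 2)
      + 2 * D j m * Gs \<beta> (nu i j k) (nu i m k) (U i j k) (U i m k) c
          * ((Ja 2 \<beta> i j k + Ja 2 \<beta> i m k) / 2)
      + 2 * D k m * Gs \<beta> (nu i j k) (nu i j m) (U i j k) (U i j m) c
          * ((Ja 3 \<beta> i j k + Ja 3 \<beta> i j m) / 2)))"
    unfolding vol_op_def by (simp add: sum_distrib_left)
  also have "\<dots> = (\<Sum>m=0..N. \<Sum>\<beta>=1..3. \<Sum>c=1..5. phiv ?V c * (2 * D i m * Gs \<beta> (nu i j k) (nu m j k) (U i j k) (U m j k) c
          * ((Ja 1 \<beta> i j k + Ja 1 \<beta> m j k) / 2)
      + 2 * D j m * Gs \<beta> (nu i j k) (nu i m k) (U i j k) (U i m k) c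
          * ((Ja 2 \<beta> i j k + Ja 2 \<beta> i m k) / 2)
      + 2 * D k m * Gs \<beta> (nu i j k) (nu i j m) (U i j k) (U i j m) c
          * ((Ja 3 \<beta> i j k + Ja 3 \<beta> i j m) / 2)))"
    by (rule swap3)
  also have "\<dots> = (\<Sum>m=0..N. \<Sum>\<beta>=1..3.
        2 * D i m * ((Ja 1 \<beta> i j k + Ja 1 \<beta> m j k) / 2) * (\<Sum>c=1..5. phiv ?V c * Gs \<beta> (nu i j k) (nu m j k) (U i j k) (U m j k) c)
      + 2 * D j m * ((Ja 2 \<beta> i j k + Ja 2 \<beta> i m k) / 2) * (\<Sum>c=1..5. phiv ?V c * Gs \<beta> (nu i j k) (nu i m k) (U i j k) (U i m k) c)
      + 2 * D k m * ((Ja 3 \<beta> i j k + Ja 3 \<beta> i j m) / 2) * (\<Sum>c=1..5. phiv ?V c * Gs \<beta> (nu i j k) (nu i j m) (U i j k) (U i j m) c))"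
    by (intro sum.cong refl) (rule lin3)
  also have "\<dots> = (\<Sum>m=0..N. \<Sum>\<beta>=1..3.
        2 * D i m * ((Ja 1 \<beta> i j k + Ja 1 \<beta> m j k) / 2) * (Gs \<beta> (nu i j k) (nu m j k) (U i j k) (U m j k) 1 * dotv (U i j k) (U m j k) / 2 + vel ?V \<beta> * ((pres \<gamma> ?V + pres \<gamma> (U m j k))/2))
      + 2 * D j m * ((Ja 2 \<beta> i j k + Ja 2 \<beta> i m k) / 2) * (Gs \<beta> (nu i j k) (nu i m k) (U i j k) (U i m k) 1 * dotv (U i j k) (U i m k) / 2 + vel ?V \<beta> * ((pres \<gamma> ?V + pres \<gamma> (U i m k))/2))
      + 2 * D k m * ((Ja 3 \<beta> i j k + Ja 3 \<beta> i j m) / 2) * (Gs \<beta> (nu i j k) (nu i j m) (U i j k) (U i j m) 1 * dotv (U i j k) (U i j m) / 2 + vel ?V \<beta> * ((pres \<gamma> ?V + pres \<gamma> (U i j m))/2)))"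
    apply (intro sum.cong refl)
    subgoal premises p for m \<beta>
    proof -
      have m: "m \<le> N" using p(1) by simp
      note h1 = HG[OF p(2) pos[OF ijk] pos[OF m ijk(2,3)]]
      note h2 = HG[OF p(2) pos[OF ijk] pos[OF ijk(1) m ijk(3)]]
      note h3 = HG[OF p(2) pos[OF ijk] pos[OF ijk(1,2) m]]
      show ?thesis by (simp only: h1 h2 h3)
    qed
    done
  also have "\<dots> = ?R" by (rule rearr)
  finally show ?thesis .
qed


lemma swap_fc:
  fixes \<phi> nh :: "nat \<Rightarrow> real" and J X :: "nat \<Rightarrow> nat \<Rightarrow> real"
  shows "(\<Sum>c\<in>C. \<phi> c * (\<Sum>\<iota>\<in>I. nh \<iota> * (\<Sum>\<beta>\<in>B. J \<iota> \<beta> * X \<beta> c)))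
       = (\<Sum>\<beta>\<in>B. (\<Sum>\<iota>\<in>I. J \<iota> \<beta> * nh \<iota>) * (\<Sum>c\<in>C. \<phi> c * X \<beta> c))"
proof -
  have "(\<Sum>c\<in>C. \<phi> c * (\<Sum>\<iota>\<in>I. nh \<iota> * (\<Sum>\<beta>\<in>B. J \<iota> \<beta> * X \<beta> c)))
      = (\<Sum>c\<in>C. \<Sum>\<iota>\<in>I. \<Sum>\<beta>\<in>B. \<phi> c * nh \<iota> * J \<iota> \<beta> * X \<beta> c)"
    by (simp add: sum_distrib_left mult_ac)
  also have "\<dots> = (\<Sum>\<iota>\<in>I. \<Sum>\<beta>\<in>B. \<Sum>c\<in>C. \<phi> c * nh \<iota> * J \<iota> \<beta> * X \<beta> c)"
    by (rule swap3)
  also have "\<dots> = (\<Sum>\<beta>\<in>B. \<Sum>\<iota>\<in>I. \<Sum>c\<in>C. \<phi> c * nh \<iota> * J \<iota> \<beta> * X \<beta> c)"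
    by (rule sum.swap)
  also have "\<dots> = (\<Sum>\<beta>\<in>B. (\<Sum>\<iota>\<in>I. J \<iota> \<beta> * nh \<iota>) * (\<Sum>c\<in>C. \<phi> c * X \<beta> c))"
    by (simp add: sum_distrib_left sum_distrib_right mult_ac)
  finally show ?thesis .
qed

lemma swap_sfc:
  fixes \<phi> :: "nat \<Rightarrow> real" and a :: "nat \<Rightarrow> real" and G :: "nat \<Rightarrow> nat \<Rightarrow> real"
  shows "(\<Sum>c\<in>C. \<phi> c * (\<Sum>\<iota>\<in>I. a \<iota> * G \<iota> c)) = (\<Sum>\<iota>\<in>I. a \<iota> * (\<Sum>c\<in>C. \<phi> c * G \<iota> c))"
proof -
  have "(\<Sum>c\<in>C. \<phi> c * (\<Sum>\<iota>\<in>I. a \<iota> * G \<iota> c)) = (\<Sum>c\<in>C. \<Sum>\<iota>\<in>I. a \<iota> * (\<phi> c * G \<iota> c))"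
    by (simp add: sum_distrib_left mult_ac)
  also have "\<dots> = (\<Sum>\<iota>\<in>I. \<Sum>c\<in>C. a \<iota> * (\<phi> c * G \<iota> c))" by (rule sum.swap)
  finally show ?thesis by (simp add: sum_distrib_left)
qed

lemma surf_pt:
  assumes HS: "\<And>\<iota>. \<iota>\<in>{1..3} \<Longrightarrow> (\<Sum>c=1..5. phiv Um c * Gstar \<iota> n Um Up c) = Gstar \<iota> n Um Up 1 * dotv Um Up / 2 + vel Um \<iota> * pstar Um Up"
    and pos: "rho Um > 0"
  shows "(\<Sum>c=1..5. phiv Um c * (surf_flux_contra Gstar JaN \<kappa> \<sigma> n Um Up c - flux_contra \<gamma> JaN \<kappa> \<sigma> n Um c))
   = (\<Sum>\<iota>=1..3. shat JaN \<kappa> \<sigma> * nvec JaN \<kappa> \<sigma> \<iota> * ((1/2) * ubar2 Um Up * Gstar \<iota> n Um Up 1 + (pstar Um Up - pres \<gamma> Um) * vel Um \<iota>))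
     - (\<Sum>\<beta>=1..3. snvec JaN \<kappa> \<sigma> \<beta> * ((rho Um * vel Um \<beta> - n \<beta> * rho Um) * (\<Sum>v=1..3. vel Um v ^ 2) / 2))"
proof -
  have A: "(\<Sum>c=1..5. phiv Um c * surf_flux_contra Gstar JaN \<kappa> \<sigma> n Um Up c)
     = (\<Sum>\<iota>=1..3. snvec JaN \<kappa> \<sigma> \<iota> * (Gstar \<iota> n Um Up 1 * dotv Um Up / 2 + vel Um \<iota> * pstar Um Up))"
    unfolding surf_flux_contra_def
    apply (subst swap_sfc)
    apply (intro sum.cong refl)
    subgoal premises p for \<iota> using HS[OF p] shat_nvec[OF p] by simp
    done
  have B: "(\<Sum>c=1..5. phiv Um c * flux_contra \<gamma> JaN \<kappa> \<sigma> n Um c)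
     = (\<Sum>\<beta>=1..3. snvec JaN \<kappa> \<sigma> \<beta> * ((rho Um * vel Um \<beta> - n \<beta> * rho Um) * (\<Sum>v=1..3. vel Um v ^ 2) / 2 + pres \<gamma> Um * vel Um \<beta>))"
    unfolding flux_contra_def
    apply (subst swap_fc)
    apply (intro sum.cong refl)
    subgoal premises p for \<beta> using flux_pt[OF pos p, of \<gamma> n] by (simp add: snvec_def)
    done
  have C: "(\<Sum>\<iota>=1..3. shat JaN \<kappa> \<sigma> * nvec JaN \<kappa> \<sigma> \<iota> * ((1/2) * ubar2 Um Up * Gstar \<iota> n Um Up 1 + (pstar Um Up - pres \<gamma> Um) * vel Um \<iota>))
     = (\<Sum>\<iota>=1..3. snvec JaN \<kappa> \<sigma> \<iota> * (Gstar \<iota> n Um Up 1 * dotv Um Up / 2 + vel Um \<iota> * pstar Um Up))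
       - (\<Sum>\<iota>=1..3. snvec JaN \<kappa> \<sigma> \<iota> * (pres \<gamma> Um * vel Um \<iota>))"
  proof -
    have "(\<Sum>\<iota>=1..3. shat JaN \<kappa> \<sigma> * nvec JaN \<kappa> \<sigma> \<iota> * ((1/2) * ubar2 Um Up * Gstar \<iota> n Um Up 1 + (pstar Um Up - pres \<gamma> Um) * vel Um \<iota>))
     = (\<Sum>\<iota>=1..3. snvec JaN \<kappa> \<sigma> \<iota> * (Gstar \<iota> n Um Up 1 * dotv Um Up / 2 + vel Um \<iota> * pstar Um Up)
       - snvec JaN \<kappa> \<sigma> \<iota> * (pres \<gamma> Um * vel Um \<iota>))"
      apply (intro sum.cong refl)
      subgoal premises p for \<iota> using shat_nvec[OF p, of JaN \<kappa> \<sigma>]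
        by (simp add: ubar2_eq dotv_def algebra_simps)
      done
    then show ?thesis by (simp only: sum_subtractf)
  qed
  have D: "(\<Sum>c=1..5. phiv Um c * (surf_flux_contra Gstar JaN \<kappa> \<sigma> n Um Up c - flux_contra \<gamma> JaN \<kappa> \<sigma> n Um c))
     = (\<Sum>c=1..5. phiv Um c * surf_flux_contra Gstar JaN \<kappa> \<sigma> n Um Up c) - (\<Sum>c=1..5. phiv Um c * flux_contra \<gamma> JaN \<kappa> \<sigma> n Um c)"
    by (simp only: right_diff_distrib sum_subtractf)
  have B': "(\<Sum>\<beta>=1..3. snvec JaN \<kappa> \<sigma> \<beta> * ((rho Um * vel Um \<beta> - n \<beta> * rho Um) * (\<Sum>v=1..3. vel Um v ^ 2) / 2 + pres \<gamma> Um * vel Um \<beta>))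
     = (\<Sum>\<beta>=1..3. snvec JaN \<kappa> \<sigma> \<beta> * ((rho Um * vel Um \<beta> - n \<beta> * rho Um) * (\<Sum>v=1..3. vel Um v ^ 2) / 2))
       + (\<Sum>\<beta>=1..3. snvec JaN \<kappa> \<sigma> \<beta> * (pres \<gamma> Um * vel Um \<beta>))"
    by (simp only: distrib_left sum.distrib)
  show ?thesis using D A B B' C by linarith
qed


lemma bd_val:
  fixes Gs :: "nat \<Rightarrow> (nat\<Rightarrow>real) \<Rightarrow> (nat\<Rightarrow>real) \<Rightarrow> (nat\<Rightarrow>real) \<Rightarrow> (nat\<Rightarrow>real) \<Rightarrow> nat \<Rightarrow> real"
    and n a :: "nat \<Rightarrow> real" and V :: "nat \<Rightarrow> real"
  assumes pos: "rho V > 0"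
    and cons: "\<And>\<beta>. \<beta>\<in>{1..3} \<Longrightarrow> Gs \<beta> n n V V 1 = flux \<gamma> \<beta> V 1 - ((n \<beta> + n \<beta>) / 2) * V 1"
  shows "(\<Sum>\<beta>=1..3. Gs \<beta> n n V V 1 * dotv V V / 2 * ((a \<beta> + a \<beta>)/2))
       = (\<Sum>\<beta>=1..3. a \<beta> * ((rho V * vel V \<beta> - n \<beta> * rho V) * (\<Sum>v=1..3. vel V v ^ 2) / 2))"
proof (rule sum.cong[OF refl])
  fix \<beta> :: nat assume b: "\<beta> \<in> {1..3}"
  have g: "Gs \<beta> n n V V 1 = rho V * vel V \<beta> - n \<beta> * rho V"
    using cons[OF b] by (simp add: flux_def rho_def)
  have d: "dotv V V = (\<Sum>v=1..3. vel V v ^ 2)" unfolding dotv_def by (simp add: power2_eq_square)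
  show "Gs \<beta> n n V V 1 * dotv V V / 2 * ((a \<beta> + a \<beta>)/2)
      = a \<beta> * ((rho V * vel V \<beta> - n \<beta> * rho V) * (\<Sum>v=1..3. vel V v ^ 2) / 2)"
    unfolding g d by (simp add: field_simps)
qed

lemma fnode_le:
  assumes "a \<le> N" "b \<le> N" "fnode N \<kappa> \<sigma> a b = (i, j, k)"
  shows "i \<le> N \<and> j \<le> N \<and> k \<le> N"
  using assms by (auto simp: fnode_def Let_def split: if_splits)

theorem theorem3p1:
  fixes N :: nat and \<xi> \<omega> :: "nat \<Rightarrow> real" and \<gamma> :: real
    and J :: "real \<Rightarrow> nat \<Rightarrow> nat \<Rightarrow> nat \<Rightarrow> real"
    and U :: "real \<Rightarrow> nat \<Rightarrow> nat \<Rightarrow> nat \<Rightarrow> nat \<Rightarrow> real"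
    and Ja :: "real \<Rightarrow> nat \<Rightarrow> nat \<Rightarrow> nat \<Rightarrow> nat \<Rightarrow> nat \<Rightarrow> real"
    and nu :: "real \<Rightarrow> nat \<Rightarrow> nat \<Rightarrow> nat \<Rightarrow> nat \<Rightarrow> real"
    and Uext :: "real \<Rightarrow> nat \<Rightarrow> bool \<Rightarrow> nat \<Rightarrow> nat \<Rightarrow> nat \<Rightarrow> real"
    and Gsharp :: "nat \<Rightarrow> (nat \<Rightarrow> real) \<Rightarrow> (nat \<Rightarrow> real) \<Rightarrow> (nat \<Rightarrow> real) \<Rightarrow> (nat \<Rightarrow> real) \<Rightarrow> nat \<Rightarrow> real"
    and Gstar :: "nat \<Rightarrow> (nat \<Rightarrow> real) \<Rightarrow> (nat \<Rightarrow> real) \<Rightarrow> (nat \<Rightarrow> real) \<Rightarrow> nat \<Rightarrow> real"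
    and pstar :: "(nat \<Rightarrow> real) \<Rightarrow> (nat \<Rightarrow> real) \<Rightarrow> real"
  assumes quad: "lgl_quadrature N \<xi> \<omega>"
    and gamma: "\<gamma> > 1"
    and pos_int: "\<forall>\<tau> i j k. i \<le> N \<and> j \<le> N \<and> k \<le> N \<longrightarrow> rho (U \<tau> i j k) > 0"
    and pos_ext: "\<forall>\<tau> \<kappa> \<sigma> a b. \<kappa> \<in> {1..3} \<and> a \<le> N \<and> b \<le> N \<longrightarrow> rho (Uext \<tau> \<kappa> \<sigma> a b) > 0"
    and diff_J: "\<forall>\<tau> i j k. (\<lambda>s. J s i j k) differentiable (at \<tau>)"
    and diff_U: "\<forall>\<tau> i j k c. (\<lambda>s. U s i j k c) differentiable (at \<tau>)"
    and vol_sym: "\<forall>\<iota> \<in> {1..3}. \<forall>nL nR UL UR. rho UL > 0 \<longrightarrow> rho UR > 0 \<longrightarrow>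
                    (\<forall>c\<in>{1..5}. Gsharp \<iota> nL nR UL UR c = Gsharp \<iota> nR nL UR UL c)"
    and vol_cons: "\<forall>\<iota> \<in> {1..3}. \<forall>nL nR V. rho V > 0 \<longrightarrow>
                    (\<forall>c\<in>{1..5}. Gsharp \<iota> nL nR V V c = flux \<gamma> \<iota> V c - ((nL \<iota> + nR \<iota>) / 2) * V c)"
    and vol_jameson: "\<forall>\<iota> \<in> {1..3}. \<forall>v \<in> {1..3}. \<forall>nL nR UL UR. rho UL > 0 \<longrightarrow> rho UR > 0 \<longrightarrow>
                    Gsharp \<iota> nL nR UL UR (v + 1) =
                      Gsharp \<iota> nL nR UL UR 1 * ((vel UL v + vel UR v) / 2)
                      + (if \<iota> = v then (pres \<gamma> UL + pres \<gamma> UR) / 2 else 0)"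
    and surf_jameson: "\<forall>\<iota> \<in> {1..3}. \<forall>v \<in> {1..3}. \<forall>n Um Up. rho Um > 0 \<longrightarrow> rho Up > 0 \<longrightarrow>
                    Gstar \<iota> n Um Up (v + 1) =
                      Gstar \<iota> n Um Up 1 * ((vel Um v + vel Up v) / 2)
                      + (if \<iota> = v then pstar Um Up else 0)"
    and pstar_cons: "\<forall>V. rho V > 0 \<longrightarrow> pstar V V = pres \<gamma> V"
    and mass_cons: "\<forall>\<iota> \<in> {1..3}. \<forall>n V. rho V > 0 \<longrightarrow> Gstar \<iota> n V V 1 = rho V * (vel V \<iota> - n \<iota>)"
    and scheme: "\<forall>\<tau> (\<phi> :: nat \<Rightarrow> nat \<Rightarrow> nat \<Rightarrow> nat \<Rightarrow> real).
       wsum N \<omega> (\<lambda>i j k. \<Sum>c=1..5. \<phi> i j k c * deriv (\<lambda>s. J s i j k * U s i j k c) \<tau>)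
       = - wsum N \<omega> (\<lambda>i j k. \<Sum>c=1..5. \<phi> i j k c *
                         vol_op N (dmat N \<xi>) Gsharp (Ja \<tau>) (nu \<tau>) (U \<tau>) i j k c)
         - surf_int N \<omega> (\<lambda>\<kappa> \<sigma> a b. case fnode N \<kappa> \<sigma> a b of (i, j, k) \<Rightarrow>
              \<Sum>c=1..5. \<phi> i j k c *
                (surf_flux_contra Gstar (\<lambda>\<iota> \<beta>. Ja \<tau> \<iota> \<beta> i j k) \<kappa> \<sigma> (nu \<tau> i j k)
                    (U \<tau> i j k) (Uext \<tau> \<kappa> \<sigma> a b) c
                 - flux_contra \<gamma> (\<lambda>\<iota> \<beta>. Ja \<tau> \<iota> \<beta> i j k) \<kappa> \<sigma> (nu \<tau> i j k) (U \<tau> i j k) c))"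
  shows "\<forall>\<tau>. ((\<lambda>s. wsum N \<omega> (\<lambda>i j k. kin (U s i j k) * J s i j k)) has_real_derivative
     (let D = dmat N \<xi>; P = (\<lambda>i j k. pres \<gamma> (U \<tau> i j k)) in
       - (1 / 2) * (\<Sum>\<iota>=1..3. wsum N \<omega> (\<lambda>i j k. \<Sum>\<beta>=1..3.
             (dxi N D \<iota> P i j k * Ja \<tau> \<iota> \<beta> i j k
              + P i j k * dxi N D \<iota> (\<lambda>i' j' k'. Ja \<tau> \<iota> \<beta> i' j' k') i j k
              + dxi N D \<iota> (\<lambda>i' j' k'. P i' j' k' * Ja \<tau> \<iota> \<beta> i' j' k') i j k)
             * vel (U \<tau> i j k) \<beta>))
       - (\<Sum>\<iota>=1..3. surf_int N \<omega> (\<lambda>\<kappa> \<sigma> a b. case fnode N \<kappa> \<sigma> a b of (i, j, k) \<Rightarrow>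
             shat (\<lambda>\<iota>' \<beta>. Ja \<tau> \<iota>' \<beta> i j k) \<kappa> \<sigma> * nvec (\<lambda>\<iota>' \<beta>. Ja \<tau> \<iota>' \<beta> i j k) \<kappa> \<sigma> \<iota>
             * ((1 / 2) * ubar2 (U \<tau> i j k) (Uext \<tau> \<kappa> \<sigma> a b)
                  * Gstar \<iota> (nu \<tau> i j k) (U \<tau> i j k) (Uext \<tau> \<kappa> \<sigma> a b) 1
                + (pstar (U \<tau> i j k) (Uext \<tau> \<kappa> \<sigma> a b) - pres \<gamma> (U \<tau> i j k))
                  * vel (U \<tau> i j k) \<iota>)))))
     (at \<tau>)"
  apply (intro allI)
  subgoal for \<tau>
  proof -
  note q = quad[unfolded lgl_quadrature_def]
  have mono: "\<forall>i<N. \<xi> i < \<xi> (Suc i)" using q by blast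
  define D where "D = dmat N \<xi>"
  have SBP: "\<And>i m. i\<le>N \<Longrightarrow> m\<le>N \<Longrightarrow> \<omega> i * D i m + \<omega> m * D m i
        = (if i=N \<and> m=N then 1 else 0) - (if i=0 \<and> m=0 then 1 else 0)"
    unfolding D_def by (rule sbp[OF quad])
  have rowsum: "\<And>i. (\<Sum>m=0..N. D i m) = 0" unfolding D_def by (rule dmat_rowsum[OF mono])
  have pos: "\<And>i j k. i\<le>N \<Longrightarrow> j\<le>N \<Longrightarrow> k\<le>N \<Longrightarrow> rho (U \<tau> i j k) > 0" using pos_int by blast
  define M where "M = (\<lambda>i j k \<beta>. (rho (U \<tau> i j k) * vel (U \<tau> i j k) \<beta> - nu \<tau> i j k \<beta> * rho (U \<tau> i j k)) * (\<Sum>v=1..3. vel (U \<tau> i j k) v ^ 2) / 2)"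
  define F1 where "F1 = (\<lambda>i m j k. \<Sum>\<beta>=1..3. Gsharp \<beta> (nu \<tau> i j k) (nu \<tau> m j k) (U \<tau> i j k) (U \<tau> m j k) 1 * dotv (U \<tau> i j k) (U \<tau> m j k) / 2 * ((Ja \<tau> 1 \<beta> i j k + Ja \<tau> 1 \<beta> m j k)/2))"
  define F2 where "F2 = (\<lambda>j m i k. \<Sum>\<beta>=1..3. Gsharp \<beta> (nu \<tau> i j k) (nu \<tau> i m k) (U \<tau> i j k) (U \<tau> i m k) 1 * dotv (U \<tau> i j k) (U \<tau> i m k) / 2 * ((Ja \<tau> 2 \<beta> i j k + Ja \<tau> 2 \<beta> i m k)/2))"
  define F3 where "F3 = (\<lambda>k m i j. \<Sum>\<beta>=1..3. Gsharp \<beta> (nu \<tau> i j k) (nu \<tau> i j m) (U \<tau> i j k) (U \<tau> i j m) 1 * dotv (U \<tau> i j k) (U \<tau> i j m) / 2 * ((Ja \<tau> 3 \<beta> i j k + Ja \<tau> 3 \<beta> i j m)/2))"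
  define PR where "PR = (\<lambda>i j k. \<Sum>\<beta>=1..3. vel (U \<tau> i j k) \<beta> *
        ((\<Sum>m=0..N. 2 * D i m * ((pres \<gamma> (U \<tau> i j k) + pres \<gamma> (U \<tau> m j k))/2) * ((Ja \<tau> 1 \<beta> i j k + Ja \<tau> 1 \<beta> m j k)/2))
       + (\<Sum>m=0..N. 2 * D j m * ((pres \<gamma> (U \<tau> i j k) + pres \<gamma> (U \<tau> i m k))/2) * ((Ja \<tau> 2 \<beta> i j k + Ja \<tau> 2 \<beta> i m k)/2))
       + (\<Sum>m=0..N. 2 * D k m * ((pres \<gamma> (U \<tau> i j k) + pres \<gamma> (U \<tau> i j m))/2) * ((Ja \<tau> 3 \<beta> i j k + Ja \<tau> 3 \<beta> i j m)/2))))"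
  define Q where "Q = (\<lambda>\<kappa> \<sigma> a b. case fnode N \<kappa> \<sigma> a b of (i, j, k) \<Rightarrow>
       \<Sum>\<beta>=1..3. snvec (\<lambda>\<iota> \<beta>. Ja \<tau> \<iota> \<beta> i j k) \<kappa> \<sigma> \<beta> * M i j k \<beta>)"
  define BN where "BN = (\<lambda>d i j k. \<Sum>\<beta>=1..3. Ja \<tau> d \<beta> i j k * M i j k \<beta>)"

  have HG: "(\<Sum>c=1..5. phiv UL c * Gsharp \<beta> nL nR UL UR c) = Gsharp \<beta> nL nR UL UR 1 * dotv UL UR / 2 + vel UL \<beta> * ((pres \<gamma> UL + pres \<gamma> UR)/2)"
    if a: "\<beta>\<in>{1..3}" "rho UL > 0" "rho UR > 0" for \<beta> nL nR UL UR
    unfolding dotv_def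
    by (rule jam_pt[where G="\<lambda>c. Gsharp \<beta> nL nR UL UR c" and UL=UL and UR=UR and \<iota>=\<beta> and P="(pres \<gamma> UL + pres \<gamma> UR)/2"])
       (use vol_jameson a in auto)

  have V0: "wsum N \<omega> (\<lambda>i j k. \<Sum>c=1..5. phiv (U \<tau> i j k) c * vol_op N D Gsharp (Ja \<tau>) (nu \<tau>) (U \<tau>) i j k c)
     = wsum N \<omega> (\<lambda>i j k. (\<Sum>m=0..N. 2 * D i m * F1 i m j k) + (\<Sum>m=0..N. 2 * D j m * F2 j m i k)
                        + (\<Sum>m=0..N. 2 * D k m * F3 k m i j) + PR i j k)"
    apply (rule wsum_cong)
    unfolding F1_def F2_def F3_def PR_def
    by (rule vol_pt[OF HG pos]) auto
  have symG: "Gsharp \<beta> (nu \<tau> i j k) (nu \<tau> i' j' k') (U \<tau> i j k) (U \<tau> i' j' k') c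
      = Gsharp \<beta> (nu \<tau> i' j' k') (nu \<tau> i j k) (U \<tau> i' j' k') (U \<tau> i j k) c"
    if "1 \<le> \<beta>" "\<beta> \<le> 3" "c \<in> {1..5}" "i\<le>N" "j\<le>N" "k\<le>N" "i'\<le>N" "j'\<le>N" "k'\<le>N" for \<beta> c i j k i' j' k'
    using vol_sym that pos[of i j k] pos[of i' j' k'] by auto
  have V1: "wsum N \<omega> (\<lambda>i j k. \<Sum>m=0..N. 2 * D i m * F1 i m j k) = (\<Sum>j=0..N. \<Sum>k=0..N. \<omega> j * \<omega> k * (F1 N N j k - F1 0 0 j k))"
    unfolding wsum_def
  proof (rule dir1[OF SBP])
    fix i m j k assume "i\<le>N" "m\<le>N" "j\<le>N" "k\<le>N"
    then show "F1 i m j k = F1 m i j k" unfolding F1_def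
      by (intro sum.cong refl) (simp add: symG dotv_sym add.commute)
  qed
  have V2: "wsum N \<omega> (\<lambda>i j k. \<Sum>m=0..N. 2 * D j m * F2 j m i k) = (\<Sum>i=0..N. \<Sum>k=0..N. \<omega> i * \<omega> k * (F2 N N i k - F2 0 0 i k))"
    unfolding wsum_def
  proof (rule dir2[OF SBP])
    fix i m j k assume "i\<le>N" "m\<le>N" "j\<le>N" "k\<le>N"
    then show "F2 i m j k = F2 m i j k" unfolding F2_def
      by (intro sum.cong refl) (simp add: symG dotv_sym add.commute)
  qed
  have V3: "wsum N \<omega> (\<lambda>i j k. \<Sum>m=0..N. 2 * D k m * F3 k m i j) = (\<Sum>i=0..N. \<Sum>j=0..N. \<omega> i * \<omega> j * (F3 N N i j - F3 0 0 i j))"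
    unfolding wsum_def
  proof (rule dir3[OF SBP])
    fix i m j k assume "i\<le>N" "m\<le>N" "j\<le>N" "k\<le>N"
    then show "F3 i m j k = F3 m i j k" unfolding F3_def
      by (intro sum.cong refl) (simp add: symG dotv_sym add.commute)
  qed
  have V: "wsum N \<omega> (\<lambda>i j k. \<Sum>c=1..5. phiv (U \<tau> i j k) c * vol_op N D Gsharp (Ja \<tau>) (nu \<tau>) (U \<tau>) i j k c)
     = (\<Sum>j=0..N. \<Sum>k=0..N. \<omega> j * \<omega> k * (F1 N N j k - F1 0 0 j k))
     + (\<Sum>i=0..N. \<Sum>k=0..N. \<omega> i * \<omega> k * (F2 N N i k - F2 0 0 i k))
     + (\<Sum>i=0..N. \<Sum>j=0..N. \<omega> i * \<omega> j * (F3 N N i j - F3 0 0 i j))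
     + wsum N \<omega> PR"
    unfolding V0 wsum_add V1 V2 V3 ..
  have BV1: "F1 i i j k = BN 1 i j k" if "i\<le>N" "j\<le>N" "k\<le>N" for i j k
    unfolding F1_def BN_def M_def
    by (rule bd_val[OF pos[OF that]]) (use vol_cons pos[OF that] in auto)
  have BV2: "F2 j j i k = BN 2 i j k" if "i\<le>N" "j\<le>N" "k\<le>N" for i j k
    unfolding F2_def BN_def M_def
    by (rule bd_val[OF pos[OF that]]) (use vol_cons pos[OF that] in auto)
  have BV3: "F3 k k i j = BN 3 i j k" if "i\<le>N" "j\<le>N" "k\<le>N" for i j k
    unfolding F3_def BN_def M_def
    by (rule bd_val[OF pos[OF that]]) (use vol_cons pos[OF that] in auto)
  have VB: "(\<Sum>j=0..N. \<Sum>k=0..N. \<omega> j * \<omega> k * (F1 N N j k - F1 0 0 j k))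
     + (\<Sum>i=0..N. \<Sum>k=0..N. \<omega> i * \<omega> k * (F2 N N i k - F2 0 0 i k))
     + (\<Sum>i=0..N. \<Sum>j=0..N. \<omega> i * \<omega> j * (F3 N N i j - F3 0 0 i j))
     = (\<Sum>j=0..N. \<Sum>k=0..N. \<omega> j * \<omega> k * (BN 1 N j k - BN 1 0 j k))
     + (\<Sum>i=0..N. \<Sum>k=0..N. \<omega> i * \<omega> k * (BN 2 i N k - BN 2 i 0 k))
     + (\<Sum>i=0..N. \<Sum>j=0..N. \<omega> i * \<omega> j * (BN 3 i j N - BN 3 i j 0))"
    by (intro arg_cong2[where f="(+)"] sum.cong refl) (simp_all add: BV1 BV2 BV3)

  have HS: "(\<Sum>c=1..5. phiv Um c * Gstar \<iota> n Um Up c) = Gstar \<iota> n Um Up 1 * dotv Um Up / 2 + vel Um \<iota> * pstar Um Up"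
    if a: "\<iota>\<in>{1..3}" "rho Um > 0" "rho Up > 0" for \<iota> n Um Up
    unfolding dotv_def
    by (rule jam_pt[where G="\<lambda>c. Gstar \<iota> n Um Up c" and UL=Um and UR=Up and \<iota>=\<iota> and P="pstar Um Up"])
       (use surf_jameson a in auto)
  define TG where "TG = (\<lambda>\<iota> \<kappa> \<sigma> a b. case fnode N \<kappa> \<sigma> a b of (i, j, k) \<Rightarrow>
             shat (\<lambda>\<iota>' \<beta>. Ja \<tau> \<iota>' \<beta> i j k) \<kappa> \<sigma> * nvec (\<lambda>\<iota>' \<beta>. Ja \<tau> \<iota>' \<beta> i j k) \<kappa> \<sigma> \<iota>
             * ((1 / 2) * ubar2 (U \<tau> i j k) (Uext \<tau> \<kappa> \<sigma> a b)
                  * Gstar \<iota> (nu \<tau> i j k) (U \<tau> i j k) (Uext \<tau> \<kappa> \<sigma> a b) 1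
                + (pstar (U \<tau> i j k) (Uext \<tau> \<kappa> \<sigma> a b) - pres \<gamma> (U \<tau> i j k))
                  * vel (U \<tau> i j k) \<iota>))"
  have S: "surf_int N \<omega> (\<lambda>\<kappa> \<sigma> a b. case fnode N \<kappa> \<sigma> a b of (i, j, k) \<Rightarrow>
              \<Sum>c=1..5. phiv (U \<tau> i j k) c *
                (surf_flux_contra Gstar (\<lambda>\<iota> \<beta>. Ja \<tau> \<iota> \<beta> i j k) \<kappa> \<sigma> (nu \<tau> i j k)
                    (U \<tau> i j k) (Uext \<tau> \<kappa> \<sigma> a b) c
                 - flux_contra \<gamma> (\<lambda>\<iota> \<beta>. Ja \<tau> \<iota> \<beta> i j k) \<kappa> \<sigma> (nu \<tau> i j k) (U \<tau> i j k) c))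
      = (\<Sum>\<iota>=1..3. surf_int N \<omega> (TG \<iota>)) - surf_int N \<omega> Q"
  proof -
    have "surf_int N \<omega> (\<lambda>\<kappa> \<sigma> a b. case fnode N \<kappa> \<sigma> a b of (i, j, k) \<Rightarrow>
              \<Sum>c=1..5. phiv (U \<tau> i j k) c *
                (surf_flux_contra Gstar (\<lambda>\<iota> \<beta>. Ja \<tau> \<iota> \<beta> i j k) \<kappa> \<sigma> (nu \<tau> i j k)
                    (U \<tau> i j k) (Uext \<tau> \<kappa> \<sigma> a b) c
                 - flux_contra \<gamma> (\<lambda>\<iota> \<beta>. Ja \<tau> \<iota> \<beta> i j k) \<kappa> \<sigma> (nu \<tau> i j k) (U \<tau> i j k) c))
      = surf_int N \<omega> (\<lambda>\<kappa> \<sigma> a b. (\<Sum>\<iota>=1..3. TG \<iota> \<kappa> \<sigma> a b) - Q \<kappa> \<sigma> a b)"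
      apply (rule surf_int_cong)
      subgoal premises p for \<kappa> \<sigma> a b
      proof -
        obtain i j k where f: "fnode N \<kappa> \<sigma> a b = (i, j, k)" by (cases "fnode N \<kappa> \<sigma> a b") auto
        have ijk: "i\<le>N" "j\<le>N" "k\<le>N" using fnode_le[OF p(2,3) f] by auto
        have pe: "rho (Uext \<tau> \<kappa> \<sigma> a b) > 0" using pos_ext p by blast
        show ?thesis unfolding f TG_def Q_def M_def
          by (simp only: prod.case)
             (rule surf_pt[where Um="U \<tau> i j k" and Up="Uext \<tau> \<kappa> \<sigma> a b" and n="nu \<tau> i j k" and Gstar=Gstar and pstar=pstar,
                   OF HS[where n="nu \<tau> i j k", OF _ pos[OF ijk] pe] pos[OF ijk]])
      qed
      done
    also have "\<dots> = (\<Sum>\<iota>=1..3. surf_int N \<omega> (TG \<iota>)) - surf_int N \<omega> Q"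
      by (simp only: surf_int_diff surf_int_sum)
    finally show ?thesis .
  qed
  have sumbool: "(\<Sum>\<sigma>\<in>(UNIV::bool set). f \<sigma>) = f True + (f False :: real)" for f
    by (simp add: UNIV_bool)
  have q1t: "Q 1 True a b = BN 1 N a b" for a b unfolding Q_def BN_def fnode_def snvec_def nhat_def sum3 by simp
  have q1f: "Q 1 False a b = - BN 1 0 a b" for a b unfolding Q_def BN_def fnode_def snvec_def nhat_def sum3 by simp
  have q2t: "Q 2 True a b = BN 2 a N b" for a b unfolding Q_def BN_def fnode_def snvec_def nhat_def sum3 by simp
  have q2f: "Q 2 False a b = - BN 2 a 0 b" for a b unfolding Q_def BN_def fnode_def snvec_def nhat_def sum3 by simp
  have q3t: "Q 3 True a b = BN 3 a b N" for a b unfolding Q_def BN_def fnode_def snvec_def nhat_def sum3 by simp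
  have q3f: "Q 3 False a b = - BN 3 a b 0" for a b unfolding Q_def BN_def fnode_def snvec_def nhat_def sum3 by simp
  have SQ: "surf_int N \<omega> Q = (\<Sum>j=0..N. \<Sum>k=0..N. \<omega> j * \<omega> k * (BN 1 N j k - BN 1 0 j k))
     + (\<Sum>i=0..N. \<Sum>k=0..N. \<omega> i * \<omega> k * (BN 2 i N k - BN 2 i 0 k))
     + (\<Sum>i=0..N. \<Sum>j=0..N. \<omega> i * \<omega> j * (BN 3 i j N - BN 3 i j 0))"
    unfolding surf_int_def sum3 sumbool q1t q1f q2t q2f q3t q3f
    by (simp add: right_diff_distrib sum_subtractf sum.distrib sum_negf)

  have PRp: "PR i j k = (1/2) * (\<Sum>\<iota>=1..3. \<Sum>\<beta>=1..3.
             (dxi N D \<iota> (\<lambda>i j k. pres \<gamma> (U \<tau> i j k)) i j k * Ja \<tau> \<iota> \<beta> i j k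
              + pres \<gamma> (U \<tau> i j k) * dxi N D \<iota> (\<lambda>i' j' k'. Ja \<tau> \<iota> \<beta> i' j' k') i j k
              + dxi N D \<iota> (\<lambda>i' j' k'. pres \<gamma> (U \<tau> i' j' k') * Ja \<tau> \<iota> \<beta> i' j' k') i j k)
             * vel (U \<tau> i j k) \<beta>)" for i j k
  proof -
    have st: "PR i j k = (\<Sum>\<beta>=1..3. vel (U \<tau> i j k) \<beta> *
       ((1/2) * ((\<Sum>m=0..N. D i m * pres \<gamma> (U \<tau> m j k)) * Ja \<tau> 1 \<beta> i j k + pres \<gamma> (U \<tau> i j k) * (\<Sum>m=0..N. D i m * Ja \<tau> 1 \<beta> m j k) + (\<Sum>m=0..N. D i m * (pres \<gamma> (U \<tau> m j k) * Ja \<tau> 1 \<beta> m j k)))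
      + (1/2) * ((\<Sum>m=0..N. D j m * pres \<gamma> (U \<tau> i m k)) * Ja \<tau> 2 \<beta> i j k + pres \<gamma> (U \<tau> i j k) * (\<Sum>m=0..N. D j m * Ja \<tau> 2 \<beta> i m k) + (\<Sum>m=0..N. D j m * (pres \<gamma> (U \<tau> i m k) * Ja \<tau> 2 \<beta> i m k)))
      + (1/2) * ((\<Sum>m=0..N. D k m * pres \<gamma> (U \<tau> i j m)) * Ja \<tau> 3 \<beta> i j k + pres \<gamma> (U \<tau> i j k) * (\<Sum>m=0..N. D k m * Ja \<tau> 3 \<beta> i j m) + (\<Sum>m=0..N. D k m * (pres \<gamma> (U \<tau> i j m) * Ja \<tau> 3 \<beta> i j m)))))"
      unfolding PR_def
      apply (intro sum.cong refl)
      subgoal for \<beta>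
        by (simp only: pr1[where D=D and i=i and N=N and P="\<lambda>m. pres \<gamma> (U \<tau> m j k)" and J="\<lambda>m. Ja \<tau> 1 \<beta> m j k", OF rowsum]
              pr1[where D=D and i=j and N=N and P="\<lambda>m. pres \<gamma> (U \<tau> i m k)" and J="\<lambda>m. Ja \<tau> 2 \<beta> i m k", OF rowsum]
              pr1[where D=D and i=k and N=N and P="\<lambda>m. pres \<gamma> (U \<tau> i j m)" and J="\<lambda>m. Ja \<tau> 3 \<beta> i j m", OF rowsum])
      done
    show ?thesis unfolding st sum3 dxi_def by (simp add: algebra_simps)
  qed
  define XI where "XI = (\<lambda>\<iota> i j k. \<Sum>\<beta>=1..3.
             (dxi N D \<iota> (\<lambda>i j k. pres \<gamma> (U \<tau> i j k)) i j k * Ja \<tau> \<iota> \<beta> i j k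
              + pres \<gamma> (U \<tau> i j k) * dxi N D \<iota> (\<lambda>i' j' k'. Ja \<tau> \<iota> \<beta> i' j' k') i j k
              + dxi N D \<iota> (\<lambda>i' j' k'. pres \<gamma> (U \<tau> i' j' k') * Ja \<tau> \<iota> \<beta> i' j' k') i j k)
             * vel (U \<tau> i j k) \<beta>)"
  have PRw: "wsum N \<omega> PR = (1/2) * (\<Sum>\<iota>=1..3. wsum N \<omega> (XI \<iota>))"
  proof -
    have "wsum N \<omega> PR = wsum N \<omega> (\<lambda>i j k. (1/2) * (\<Sum>\<iota>=1..3. XI \<iota> i j k))"
      by (rule wsum_cong) (simp only: PRp XI_def)
    then show ?thesis by (simp only: wsum_cmult wsum_sum)
  qed
  have der: "((\<lambda>s. wsum N \<omega> (\<lambda>i j k. kin (U s i j k) * J s i j k)) has_real_derivative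
      wsum N \<omega> (\<lambda>i j k. \<Sum>c=1..5. phiv (U \<tau> i j k) c * deriv (\<lambda>s. J s i j k * U s i j k c) \<tau>)) (at \<tau>)"
    unfolding wsum_def
    apply (intro DERIV_sum DERIV_cmult)
    subgoal for i j k
      using kinJ_deriv[where f="\<lambda>c s. U s i j k c" and \<tau>=\<tau> and g="\<lambda>s. J s i j k"] diff_U diff_J pos_int
      by (auto simp: rho_def)
    done
  note sch = spec[OF spec[OF scheme, of \<tau>], of "\<lambda>i j k c. phiv (U \<tau> i j k) c", folded D_def]
  note S' = S[unfolded TG_def]
  note PRw' = PRw[unfolded XI_def]
  show ?thesis
    unfolding Let_def D_def[symmetric]
    apply (rule DERIV_cong[OF der])
    using sch V VB SQ S' PRw' by linarith
  qed
  done

end
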